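(* Let $\tau\ge 0$, $C:=C([-\tau,0];\mathbb{R}^n)$ with the supremum norm, and consider the linear system $$x'(t)=\mathcal{L}(t)x_t,\qquad t\ge 0, \tag{L}$$ where $\mathcal{L}(t)\in L(C,\mathbb{R}^n)$ for each $t\ge0$, $t\mapsto \mathcal{L}(t)\phi$ is Borel measurable for each $\phi\in C$, and $\|\mathcal{L}(t)\|\le m(t)$ for some $m\in L^1_{\rm loc}(\mathbb{R}^+;\mathbb{R})$. Assume that (L) is exponentially asymptotically stable, i.e. there exist $k,\alpha>0$ such that $|x(t,t_0,\varphi)|\le k e^{-\alpha(t-t_0)}\|\varphi\|$ for all $t\ge t_0\ge 0$ and $\varphi\in C$, where $x(t,t_0,\varphi)$ is the solution of (L) with $x_{t_0}=\varphi$. Consider the perturbed equation $$x'(t)=\mathcal{L}(t)x_t+f(t,x_t),\qquad t\ge 0,\tag{P}$$ where $f:[0,\infty)\times S\to\mathbb{R}^n$ is continuous and $S\subset C$ is a positively invariant set for (P) (solutions are considered with initial data in $S$). (i) If $f$ is bounded, then (P) is dissipative: all solutions of (P) (with initial data in $S$) are defined on $[0,\infty)$ and there exists $M>0$ such that every solution satisfies $\limsup_{t\to\infty}|x(t)|\le M$. (ii) If there exists a measurable $\beta:\mathbb{R}^+\to\mathbb{R}^+$ with $\int_0^\infty\beta(s)\,ds<\infty$ such that $|f(t,\phi)|\le \beta(t)\|\phi\|$ for all $\phi\in S$ and all sufficiently large $t$, then every solution $x(t)$ of (P) satisfies $\lim_{t\to\infty}x(t)=0$.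
   Context: $|\cdot|$ is a fixed norm on $\mathbb{R}^n$, $\|\phi\|=\max_{\theta\in[-\tau,0]}|\phi(\theta)|$, and for a function $x$ defined on $[t-\tau,t]$, $x_t\in C$ denotes the segment $x_t(\theta)=x(t+\theta)$, $\theta\in[-\tau,0]$. $L(C,\mathbb{R}^n)$ is the space of bounded linear operators with the operator norm. *)

theory Defs
  imports "HOL-Analysis.Analysis"
begin

text \<open>The phase space C = C([-tau,0]; R^n). An element is represented by a function
  real => real^'n that is continuous on [-tau,0] and vanishes outside [-tau,0]
  (canonical representative).\<close>
definition Cspace :: "real \<Rightarrow> (real \<Rightarrow> 'a::real_normed_vector) set" where
  "Cspace \<tau> = {\<phi>. continuous_on {-\<tau>..0} \<phi> \<and> (\<forall>\<theta>. \<theta> \<notin> {-\<tau>..0} \<longrightarrow> \<phi> \<theta> = 0)}"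

definition cnorm :: "real \<Rightarrow> (real \<Rightarrow> 'a::real_normed_vector) \<Rightarrow> real" where
  "cnorm \<tau> \<phi> = (SUP \<theta>\<in>{-\<tau>..0}. norm (\<phi> \<theta>))"

definition seg :: "real \<Rightarrow> (real \<Rightarrow> 'a::zero) \<Rightarrow> real \<Rightarrow> real \<Rightarrow> 'a" where
  "seg \<tau> x t = (\<lambda>\<theta>. if \<theta> \<in> {-\<tau>..0} then x (t + \<theta>) else 0)"

text \<open>(Caratheodory) solution of the linear system (L) on [t0,T), given on [t0-tau,T).\<close>
definition solL :: "real \<Rightarrow> (real \<Rightarrow> (real \<Rightarrow> 'a::euclidean_space) \<Rightarrow> 'a)
    \<Rightarrow> real \<Rightarrow> real \<Rightarrow> (real \<Rightarrow> 'a) \<Rightarrow> bool" where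
  "solL \<tau> L t0 T x \<longleftrightarrow> continuous_on {t0-\<tau>..<T} x \<and>
     (\<forall>t\<in>{t0..<T}. ((\<lambda>s. L s (seg \<tau> x s)) has_integral (x t - x t0)) {t0..t})"

definition globL :: "real \<Rightarrow> (real \<Rightarrow> (real \<Rightarrow> 'a::euclidean_space) \<Rightarrow> 'a)
    \<Rightarrow> real \<Rightarrow> (real \<Rightarrow> 'a) \<Rightarrow> bool" where
  "globL \<tau> L t0 x \<longleftrightarrow> (\<forall>T>t0. solL \<tau> L t0 T x)"

text \<open>(Caratheodory) solution of the perturbed system (P) on [t0,T) with segments in S.\<close>
definition solP :: "real \<Rightarrow> (real \<Rightarrow> (real \<Rightarrow> 'a::euclidean_space) \<Rightarrow> 'a)
    \<Rightarrow> (real \<Rightarrow> (real \<Rightarrow> 'a) \<Rightarrow> 'a) \<Rightarrow> (real \<Rightarrow> 'a) set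
    \<Rightarrow> real \<Rightarrow> real \<Rightarrow> (real \<Rightarrow> 'a) \<Rightarrow> bool" where
  "solP \<tau> L f S t0 T x \<longleftrightarrow> continuous_on {t0-\<tau>..<T} x \<and>
     (\<forall>t\<in>{t0..<T}. seg \<tau> x t \<in> S) \<and>
     (\<forall>t\<in>{t0..<T}. ((\<lambda>s. L s (seg \<tau> x s) + f s (seg \<tau> x s)) has_integral (x t - x t0)) {t0..t})"

definition globP :: "real \<Rightarrow> (real \<Rightarrow> (real \<Rightarrow> 'a::euclidean_space) \<Rightarrow> 'a)
    \<Rightarrow> (real \<Rightarrow> (real \<Rightarrow> 'a) \<Rightarrow> 'a) \<Rightarrow> (real \<Rightarrow> 'a) set
    \<Rightarrow> real \<Rightarrow> (real \<Rightarrow> 'a) \<Rightarrow> bool" where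
  "globP \<tau> L f S t0 x \<longleftrightarrow> (\<forall>T>t0. solP \<tau> L f S t0 T x)"

definition exp_stable :: "real \<Rightarrow> (real \<Rightarrow> (real \<Rightarrow> 'a::euclidean_space) \<Rightarrow> 'a)
    \<Rightarrow> real \<Rightarrow> real \<Rightarrow> bool" where
  "exp_stable \<tau> L k \<alpha> \<longleftrightarrow>
     (\<forall>t0\<ge>0. \<forall>\<phi>\<in>Cspace \<tau>. \<forall>x. globL \<tau> L t0 x \<and> seg \<tau> x t0 = \<phi> \<longrightarrow>
        (\<forall>t\<ge>t0. norm (x t) \<le> k * exp (-\<alpha> * (t - t0)) * cnorm \<tau> \<phi>))"

definition cont_on_S :: "real \<Rightarrow> (real \<Rightarrow> (real \<Rightarrow> 'a::real_normed_vector) \<Rightarrow> 'a)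
    \<Rightarrow> (real \<Rightarrow> 'a) set \<Rightarrow> bool" where
  "cont_on_S \<tau> f S \<longleftrightarrow>
     (\<forall>t\<ge>0. \<forall>\<phi>\<in>S. \<forall>\<epsilon>>0. \<exists>\<delta>>0. \<forall>s\<ge>0. \<forall>\<psi>\<in>S.
        \<bar>s - t\<bar> < \<delta> \<and> cnorm \<tau> (\<lambda>\<theta>. \<psi> \<theta> - \<phi> \<theta>) < \<delta> \<longrightarrow> dist (f s \<psi>) (f t \<phi>) < \<epsilon>)"

text \<open>Positive invariance of S for (P): solutions with initial data in S exist (locally)
  and remain in S, including at the right end point of their (closed) interval of existence.\<close>
definition pos_invariant :: "real \<Rightarrow> (real \<Rightarrow> (real \<Rightarrow> 'a::euclidean_space) \<Rightarrow> 'a)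
    \<Rightarrow> (real \<Rightarrow> (real \<Rightarrow> 'a) \<Rightarrow> 'a) \<Rightarrow> (real \<Rightarrow> 'a) set \<Rightarrow> bool" where
  "pos_invariant \<tau> L f S \<longleftrightarrow>
     (\<forall>t0\<ge>0. \<forall>\<phi>\<in>S. \<exists>\<delta>>0. \<exists>x. seg \<tau> x t0 = \<phi> \<and> solP \<tau> L f S t0 (t0 + \<delta>) x) \<and>
     (\<forall>t0\<ge>0. \<forall>T>t0. \<forall>x. solP \<tau> L f S t0 T x \<and> continuous_on {t0-\<tau>..T} x \<longrightarrow> seg \<tau> x T \<in> S)"

end

theory Submission
  imports Defs
begin
section \<open>Basic facts on segments and the sup norm\<close>

lemma bdd_norm_cont:
  fixes \<phi> :: "real \<Rightarrow> 'a::real_normed_vector"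
  assumes "continuous_on {a..b} \<phi>"
  shows "bdd_above ((\<lambda>\<theta>. norm (\<phi> \<theta>)) ` {a..b})"
proof -
  have "compact ((\<lambda>\<theta>. norm (\<phi> \<theta>)) ` {a..b})"
    by (intro compact_continuous_image continuous_on_norm assms compact_Icc)
  then show ?thesis by (intro bounded_imp_bdd_above compact_imp_bounded)
qed

lemma cnorm_le:
  assumes "\<tau> \<ge> 0" "\<And>\<theta>. \<theta> \<in> {-\<tau>..0} \<Longrightarrow> norm (\<phi> \<theta>) \<le> B"
  shows "cnorm \<tau> \<phi> \<le> B"
  unfolding cnorm_def using assms by (intro cSUP_least) auto

lemma norm_le_cnorm:
  assumes "continuous_on {-\<tau>..0} \<phi>" "\<theta> \<in> {-\<tau>..0}"
  shows "norm (\<phi> \<theta>) \<le> cnorm \<tau> \<phi>"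
  unfolding cnorm_def using assms bdd_norm_cont[OF assms(1)] by (intro cSUP_upper) auto

lemma cnorm_nonneg:
  assumes "\<tau> \<ge> 0" "continuous_on {-\<tau>..0} \<phi>"
  shows "0 \<le> cnorm \<tau> \<phi>"
proof -
  have "norm (\<phi> 0) \<le> cnorm \<tau> \<phi>" using assms by (intro norm_le_cnorm) auto
  then show ?thesis using norm_ge_zero[of "\<phi> 0"] by linarith
qed

lemma seg_at: "\<theta> \<in> {-\<tau>..0} \<Longrightarrow> seg \<tau> x t \<theta> = x (t + \<theta>)"
  by (simp add: seg_def)

lemma seg_zero: "\<tau> \<ge> 0 \<Longrightarrow> seg \<tau> x t 0 = x t"
  by (simp add: seg_def)

lemma seg_cong:
  assumes "\<And>s. s \<in> {t-\<tau>..t} \<Longrightarrow> x s = y s"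
  shows "seg \<tau> x t = seg \<tau> y t"
  using assms unfolding seg_def fun_eq_iff by simp

lemma seg_diff: fixes x y :: "real \<Rightarrow> 'a::ab_group_add" shows "seg \<tau> (\<lambda>s. x s - y s) t = (\<lambda>\<theta>. seg \<tau> x t \<theta> - seg \<tau> y t \<theta>)"
  by (simp add: seg_def fun_eq_iff)

lemma seg_cont:
  assumes "continuous_on {t-\<tau>..t} x"
  shows "continuous_on {-\<tau>..0} (seg \<tau> x t)"
proof -
  have c: "continuous_on {-\<tau>..0} (\<lambda>\<theta>. t + \<theta>)"
    by (intro continuous_on_add continuous_on_const continuous_on_id)
  have "continuous_on {-\<tau>..0} (\<lambda>\<theta>. x (t + \<theta>))"
    by (rule continuous_on_compose2[OF assms c]) auto
  moreover have "\<And>\<theta>. \<theta> \<in> {-\<tau>..0} \<Longrightarrow> x (t + \<theta>) = seg \<tau> x t \<theta>"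
    by (simp add: seg_def)
  ultimately show ?thesis by (rule continuous_on_eq)
qed

lemma seg_in_Cspace:
  assumes "continuous_on {t-\<tau>..t} x"
  shows "seg \<tau> x t \<in> Cspace \<tau>"
  unfolding Cspace_def using seg_cont[OF assms] by (simp add: seg_def)

lemma Cspace_cont: "\<phi> \<in> Cspace \<tau> \<Longrightarrow> continuous_on {-\<tau>..0} \<phi>"
  by (simp add: Cspace_def)

lemma cnorm_seg_le:
  assumes "\<tau> \<ge> 0" "\<And>s. s \<in> {t-\<tau>..t} \<Longrightarrow> norm (x s) \<le> B"
  shows "cnorm \<tau> (seg \<tau> x t) \<le> B"
  using assms by (intro cnorm_le) (simp_all add: seg_def)

lemma norm_le_cnorm_seg:
  assumes "continuous_on {t-\<tau>..t} x" "s \<in> {t-\<tau>..t}"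
  shows "norm (x s) \<le> cnorm \<tau> (seg \<tau> x t)"
proof -
  have "norm (seg \<tau> x t (s - t)) \<le> cnorm \<tau> (seg \<tau> x t)"
    using assms by (intro norm_le_cnorm[OF seg_cont[OF assms(1)]]) auto
  then show ?thesis using assms(2) by (simp add: seg_def)
qed

lemma Cspace_diff: "\<phi> \<in> Cspace \<tau> \<Longrightarrow> \<psi> \<in> Cspace \<tau> \<Longrightarrow> (\<lambda>\<theta>. \<phi> \<theta> - \<psi> \<theta>) \<in> Cspace \<tau>"
  unfolding Cspace_def by (auto intro: continuous_on_diff)

lemma Cspace_scale: "\<phi> \<in> Cspace \<tau> \<Longrightarrow> (\<lambda>\<theta>. c *\<^sub>R \<phi> \<theta>) \<in> Cspace \<tau>"
  unfolding Cspace_def by (auto intro: continuous_on_scaleR continuous_on_const)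

locale lfde =
  fixes \<tau> :: real
    and L :: "real \<Rightarrow> (real \<Rightarrow> 'a::euclidean_space) \<Rightarrow> 'a"
    and m :: "real \<Rightarrow> real"
    and k \<alpha> :: real
  assumes tau: "\<tau> \<ge> 0"
    and L_add: "\<forall>t\<ge>0. \<forall>\<phi>\<in>Cspace \<tau>. \<forall>\<psi>\<in>Cspace \<tau>. L t (\<lambda>\<theta>. \<phi> \<theta> + \<psi> \<theta>) = L t \<phi> + L t \<psi>"
    and L_scale: "\<forall>t\<ge>0. \<forall>c::real. \<forall>\<phi>\<in>Cspace \<tau>. L t (\<lambda>\<theta>. c *\<^sub>R \<phi> \<theta>) = c *\<^sub>R L t \<phi>"
    and L_meas: "\<forall>\<phi>\<in>Cspace \<tau>. set_borel_measurable lborel {0..} (\<lambda>t. L t \<phi>)"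
    and L_bound: "\<forall>t\<ge>0. \<forall>\<phi>\<in>Cspace \<tau>. norm (L t \<phi>) \<le> m t * cnorm \<tau> \<phi>"
    and m_loc: "\<forall>T\<ge>0. set_integrable lborel {0..T} m"
    and k: "k > 0" and \<alpha>: "\<alpha> > 0"
    and stable: "exp_stable \<tau> L k \<alpha>"
begin

lemma L_diff:
  assumes "t \<ge> 0" "\<phi> \<in> Cspace \<tau>" "\<psi> \<in> Cspace \<tau>"
  shows "L t (\<lambda>\<theta>. \<phi> \<theta> - \<psi> \<theta>) = L t \<phi> - L t \<psi>"
proof -
  have m: "(\<lambda>\<theta>. (-1) *\<^sub>R \<psi> \<theta>) \<in> Cspace \<tau>" using assms(3) by (rule Cspace_scale)
  have "L t (\<lambda>\<theta>. \<phi> \<theta> - \<psi> \<theta>) = L t (\<lambda>\<theta>. \<phi> \<theta> + (\<lambda>\<theta>. (-1) *\<^sub>R \<psi> \<theta>) \<theta>)"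
    by simp
  also have "\<dots> = L t \<phi> + L t (\<lambda>\<theta>. (-1) *\<^sub>R \<psi> \<theta>)"
    using L_add[rule_format, OF assms(1) assms(2) m] .
  also have "L t (\<lambda>\<theta>. (-1) *\<^sub>R \<psi> \<theta>) = (-1) *\<^sub>R L t \<psi>"
    using L_scale[rule_format, OF assms(1) assms(3)] .
  finally show ?thesis by simp
qed

lemma L_seg_diff:
  assumes "t \<ge> 0" "continuous_on {t-\<tau>..t} x" "continuous_on {t-\<tau>..t} y"
  shows "L t (seg \<tau> (\<lambda>s. x s - y s) t) = L t (seg \<tau> x t) - L t (seg \<tau> y t)"
  unfolding seg_diff using assms by (intro L_diff[OF assms(1)] seg_in_Cspace[OF assms(2)] seg_in_Cspace[OF assms(3)])

lemma m_nonneg: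
  assumes "t \<ge> 0" shows "m t \<ge> 0"
proof (rule ccontr)
  assume neg: "\<not> m t \<ge> 0"
  obtain v :: 'a where v: "v \<in> Basis" using nonempty_Basis by blast
  have c: "continuous_on {0-\<tau>..0} (\<lambda>_. v)" by (rule continuous_on_const)
  have "norm (seg \<tau> (\<lambda>_. v) 0 0) \<le> cnorm \<tau> (seg \<tau> (\<lambda>_. v) 0)"
    using tau by (intro norm_le_cnorm[OF seg_cont[OF c]]) simp
  then have c1: "1 \<le> cnorm \<tau> (seg \<tau> (\<lambda>_. v) 0)"
    using v tau by (simp add: seg_def)
  have "norm (L t (seg \<tau> (\<lambda>_. v) 0)) \<le> m t * cnorm \<tau> (seg \<tau> (\<lambda>_. v) 0)"
    using L_bound[rule_format, OF assms seg_in_Cspace[OF c]] .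
  moreover have "m t * cnorm \<tau> (seg \<tau> (\<lambda>_. v) 0) < 0"
    using neg c1 by (simp add: mult_neg_pos)
  ultimately show False using norm_ge_zero[of "L t (seg \<tau> (\<lambda>_. v) 0)"] by linarith
qed

lemma m_set_int:
  assumes "0 \<le> a" shows "set_integrable lborel {a..b} m"
proof (cases "0 \<le> b")
  case True
  have 1: "set_integrable lborel {0..b} m" using m_loc True by blast
  have 2: "{a..b} \<subseteq> {0..b}" using assms by auto
  show ?thesis using set_integrable_subset[OF 1 _ 2] by simp
next
  case False
  then have 2: "{a..b} \<subseteq> {0..0}" using assms by auto
  have 1: "set_integrable lborel {0..0} m" using m_loc by blast
  show ?thesis using set_integrable_subset[OF 1 _ 2] by simp
qed

lemma m_int:
  assumes "0 \<le> a" shows "m integrable_on {a..b}"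
  using set_borel_integral_eq_integral(1)[OF m_set_int[OF assms]] .

lemma L_seg_bound:
  assumes "t \<ge> 0" "continuous_on {t-\<tau>..t} x" "\<And>s. s \<in> {t-\<tau>..t} \<Longrightarrow> norm (x s) \<le> B"
  shows "norm (L t (seg \<tau> x t)) \<le> m t * B"
proof -
  have "norm (L t (seg \<tau> x t)) \<le> m t * cnorm \<tau> (seg \<tau> x t)"
    using L_bound[rule_format, OF assms(1) seg_in_Cspace[OF assms(2)]] .
  also have "\<dots> \<le> m t * B"
    using assms m_nonneg[OF assms(1)] tau by (intro mult_left_mono cnorm_seg_le) simp_all
  finally show ?thesis .
qed

end

context lfde begin

lemma L_meas_restrict:
  assumes "0 \<le> a" "\<phi> \<in> Cspace \<tau>"
  shows "(\<lambda>s. indicator {a..b} s *\<^sub>R L s \<phi>) \<in> borel_measurable lborel"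
proof -
  have 1: "(\<lambda>s. indicator {0..} s *\<^sub>R L s \<phi>) \<in> borel_measurable lborel"
    using L_meas assms(2) unfolding set_borel_measurable_def by blast
  have 2: "(\<lambda>s. indicator {a..b} s *\<^sub>R (indicator {0..} s *\<^sub>R L s \<phi>)) \<in> borel_measurable lborel"
    by (rule borel_measurable_scaleR[OF borel_measurable_indicator 1]) simp
  have "\<And>s. indicator {a..b} s *\<^sub>R (indicator {0..} s *\<^sub>R L s \<phi>) = indicator {a..b} s *\<^sub>R L s \<phi>"
    using assms(1) by (simp add: indicator_def)
  then have "(\<lambda>s. indicator {a..b} s *\<^sub>R (indicator {0..} s *\<^sub>R L s \<phi>)) = (\<lambda>s. indicator {a..b} s *\<^sub>R L s \<phi>)"
    by (rule ext)
  then show ?thesis using 2 by metis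
qed

lemma L_seg_meas_UNIV:
  assumes a: "0 \<le> a" and w: "continuous_on UNIV w"
  shows "(\<lambda>s. indicator {a..b} s *\<^sub>R L s (seg \<tau> w s)) \<in> borel_measurable lborel"
proof (rule borel_measurable_LIMSEQ_metric)
  define c where "c j s = a + real_of_int \<lceil>(s - a) * (real j + 1)\<rceil> / (real j + 1)" for j :: nat and s
  define F where "F j s = indicator {a..b} s *\<^sub>R L s (seg \<tau> w (c j s))" for j s
  show "F j \<in> borel_measurable lborel" for j
  proof -
    define G where "G i s = indicator {a..b} s *\<^sub>R L s (seg \<tau> w (a + real_of_int i / (real j + 1)))" for i :: int and s
    have 1: "(\<lambda>s. G i s) \<in> borel_measurable lborel" for i
    proof -
      have "seg \<tau> w (a + real_of_int i / (real j + 1)) \<in> Cspace \<tau>"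
        by (intro seg_in_Cspace continuous_on_subset[OF w]) simp
      then show ?thesis unfolding G_def by (rule L_meas_restrict[OF a])
    qed
    have 2: "(\<lambda>s. \<lceil>(s - a) * (real j + 1)\<rceil>) \<in> measurable lborel (count_space UNIV)"
      by measurable
    have 3: "(\<lambda>s. G (\<lceil>(s - a) * (real j + 1)\<rceil>) s) \<in> borel_measurable lborel"
      by (rule measurable_compose_countable[OF 1 2])
    have "F j = (\<lambda>s. G (\<lceil>(s - a) * (real j + 1)\<rceil>) s)"
      by (rule ext) (simp add: F_def c_def G_def)
    then show ?thesis using 3 by simp
  qed
  fix s :: real
  show "(\<lambda>j. F j s) \<longlonglongrightarrow> indicator {a..b} s *\<^sub>R L s (seg \<tau> w s)"
  proof (cases "s \<in> {a..b}")
    case False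
    then show ?thesis by (simp add: F_def)
  next
    case True
    then have s0: "s \<ge> 0" using a by auto
    have cb: "s \<le> c j s \<and> c j s \<le> s + 1 / (real j + 1)" for j
    proof -
      define p where "p = real j + 1"
      have p: "p > 0" unfolding p_def by simp
      define C where "C = real_of_int \<lceil>(s - a) * p\<rceil>"
      have C1: "(s - a) * p \<le> C" unfolding C_def by (rule le_of_int_ceiling)
      have C2: "C \<le> (s - a) * p + 1" unfolding C_def by linarith
      have "s - a \<le> C / p" using C1 p by (simp add: pos_le_divide_eq)
      moreover have "C / p \<le> (s - a) + 1 / p" using C2 p by (simp add: pos_divide_le_eq field_simps)
      moreover have "c j s = a + C / p" unfolding c_def C_def p_def by simp
      ultimately show ?thesis unfolding p_def by simp
    qed
    define K where "K = {a - \<tau> - 1 .. b + 1}"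
    have uc: "uniformly_continuous_on K w"
      unfolding K_def by (intro compact_uniformly_continuous continuous_on_subset[OF w]) auto
    define d where "d j = cnorm \<tau> (\<lambda>\<theta>. seg \<tau> w (c j s) \<theta> - seg \<tau> w s \<theta>)" for j
    have d0: "d \<longlonglongrightarrow> 0"
    proof (rule LIMSEQ_I)
      fix r :: real assume r: "r > 0"
      obtain e where e: "e > 0" "\<forall>x\<in>K. \<forall>x'\<in>K. dist x' x < e \<longrightarrow> dist (w x') (w x) < r / 2"
        using uc r half_gt_zero unfolding uniformly_continuous_on_def by blast
      obtain N :: nat where N: "1 / e < real N" using reals_Archimedean2 by blast
      show "\<exists>no. \<forall>n\<ge>no. norm (d n - 0) < r"
      proof (intro exI allI impI)
        fix n assume n: "N \<le> n"
        have "1 / (real n + 1) < e"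
        proof -
          have "1 / e < real n + 1" using N n by linarith
          then show ?thesis using e(1) by (simp add: field_simps)
        qed
        then have cn: "s \<le> c n s" "c n s < s + e" using cb[of n] by auto
        have cb': "c n s \<le> s + 1 / (real n + 1)" using cb[of n] by simp
        have "1 / (real n + 1) \<le> 1" by simp
        moreover have "s \<le> b" using True by simp
        ultimately have cK: "c n s \<le> b + 1" using cb' by linarith
        have "d n \<le> r / 2" unfolding d_def
        proof (rule cnorm_le[OF tau])
          fix \<theta> :: real assume th: "\<theta> \<in> {-\<tau>..0}"
          have x1: "s + \<theta> \<in> K" using th True cn cK unfolding K_def by auto
          have x2: "c n s + \<theta> \<in> K" using th True cn cK unfolding K_def by auto
          have "dist (c n s + \<theta>) (s + \<theta>) < e" using cn by (simp add: dist_real_def)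
          then have "dist (w (c n s + \<theta>)) (w (s + \<theta>)) < r / 2" using e(2) x1 x2 by blast
          then show "norm (seg \<tau> w (c n s) \<theta> - seg \<tau> w s \<theta>) \<le> r / 2"
            using th by (simp add: seg_def dist_norm)
        qed
        moreover have "0 \<le> d n" unfolding d_def
          by (intro cnorm_nonneg[OF tau] continuous_on_diff seg_cont continuous_on_subset[OF w]) simp_all
        ultimately show "norm (d n - 0) < r" using r by simp
      qed
    qed
    have "(\<lambda>j. F j s - indicator {a..b} s *\<^sub>R L s (seg \<tau> w s)) \<longlonglongrightarrow> 0"
    proof (rule Lim_null_comparison)
      show "(\<lambda>j. m s * d j) \<longlonglongrightarrow> 0" using d0 by (rule tendsto_mult_right_zero)
      show "\<forall>\<^sub>F j in sequentially. norm (F j s - indicator {a..b} s *\<^sub>R L s (seg \<tau> w s)) \<le> m s * d j"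
      proof (rule always_eventually, rule allI)
        fix j
        have "F j s - indicator {a..b} s *\<^sub>R L s (seg \<tau> w s) = L s (seg \<tau> w (c j s)) - L s (seg \<tau> w s)"
          using True by (simp add: F_def)
        also have "\<dots> = L s (\<lambda>\<theta>. seg \<tau> w (c j s) \<theta> - seg \<tau> w s \<theta>)"
          by (rule L_diff[symmetric, OF s0]) (intro seg_in_Cspace continuous_on_subset[OF w]; simp)+
        finally show "norm (F j s - indicator {a..b} s *\<^sub>R L s (seg \<tau> w s)) \<le> m s * d j"
          unfolding d_def using L_bound s0 Cspace_diff seg_in_Cspace continuous_on_subset[OF w]
          by (metis subset_UNIV)
      qed
    qed
    then show ?thesis by (rule LIM_zero_cancel)
  qed
qed

lemma L_seg_set_integrable:
  assumes a: "0 \<le> a" and ab: "a \<le> b" and w: "continuous_on {a-\<tau>..b} w"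
  shows "set_integrable lborel {a..b} (\<lambda>s. L s (seg \<tau> w s))"
proof -
  define cl where "cl s = max (a - \<tau>) (min b s)" for s :: real
  define w' where "w' s = w (cl s)" for s
  have clc: "continuous_on UNIV cl" unfolding cl_def
    by (intro continuous_on_max continuous_on_min continuous_on_const continuous_on_id)
  have clr: "cl ` UNIV \<subseteq> {a-\<tau>..b}" using ab tau unfolding cl_def by auto
  have w'c: "continuous_on UNIV w'" unfolding w'_def
    by (rule continuous_on_compose2[OF w clc clr])
  have "compact (w ` {a-\<tau>..b})" by (intro compact_continuous_image w compact_Icc)
  then obtain K where K: "\<And>y. y \<in> w ` {a-\<tau>..b} \<Longrightarrow> norm y \<le> K"
    using compact_imp_bounded bounded_iff by metis
  have K': "norm (w' s) \<le> K" for s unfolding w'_def using K clr by blast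
  have meas: "(\<lambda>s. indicator {a..b} s *\<^sub>R L s (seg \<tau> w' s)) \<in> borel_measurable lborel"
    by (rule L_seg_meas_UNIV[OF a w'c])
  have bi: "integrable lborel (\<lambda>s. K * (indicator {a..b} s *\<^sub>R m s))"
    using m_set_int[OF a, of b] unfolding set_integrable_def by (rule integrable_mult_right)
  have "integrable lborel (\<lambda>s. indicator {a..b} s *\<^sub>R L s (seg \<tau> w' s))"
  proof (rule Bochner_Integration.integrable_bound[OF bi meas], rule AE_I2)
    fix s :: real
    show "norm (indicator {a..b} s *\<^sub>R L s (seg \<tau> w' s)) \<le> norm (K * (indicator {a..b} s *\<^sub>R m s))"
    proof (cases "s \<in> {a..b}")
      case True
      then have s0: "s \<ge> 0" using a by auto
      have "norm (L s (seg \<tau> w' s)) \<le> m s * K"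
        by (rule L_seg_bound[OF s0 continuous_on_subset[OF w'c] K']) simp
      also have "\<dots> \<le> norm (K * m s)"
        by (metis abs_ge_self mult.commute real_norm_def)
      finally show ?thesis using True by simp
    qed simp
  qed
  then have "set_integrable lborel {a..b} (\<lambda>s. L s (seg \<tau> w' s))"
    unfolding set_integrable_def .
  moreover have "\<And>s. s \<in> {a..b} \<Longrightarrow> seg \<tau> w' s = seg \<tau> w s"
    by (rule seg_cong) (simp add: w'_def cl_def)
  then have "(\<lambda>s. indicator {a..b} s *\<^sub>R L s (seg \<tau> w' s)) = (\<lambda>s. indicator {a..b} s *\<^sub>R L s (seg \<tau> w s))"
    by (intro ext) (auto simp: indicator_def)
  ultimately show ?thesis unfolding set_integrable_def by simp
qed

lemma L_seg_integrable:
  assumes a: "0 \<le> a" and w: "continuous_on {a-\<tau>..b} w"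
  shows "(\<lambda>s. L s (seg \<tau> w s)) integrable_on {a..b}"
proof (cases "a \<le> b")
  case True
  then show ?thesis using set_borel_integral_eq_integral(1)[OF L_seg_set_integrable[OF a True w]] by simp
next
  case False
  then show ?thesis by (simp add: integrable_on_empty)
qed

end

definition isol :: "real \<Rightarrow> (real \<Rightarrow> (real \<Rightarrow> 'a::euclidean_space) \<Rightarrow> 'a) \<Rightarrow> real \<Rightarrow> real \<Rightarrow> (real \<Rightarrow> 'a) \<Rightarrow> bool" where
  "isol \<tau> F t0 c y \<longleftrightarrow> continuous_on {t0-\<tau>..c} y \<and>
     (\<forall>t\<in>{t0..c}. ((\<lambda>s. F s (seg \<tau> y s)) has_integral (y t - y t0)) {t0..t})"

lemma glue:
  fixes F :: "real \<Rightarrow> (real \<Rightarrow> 'a) \<Rightarrow> 'a::euclidean_space"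
  assumes tc: "t0 \<le> c" and cd: "c \<le> d" and tau: "0 \<le> \<tau>"
    and y: "isol \<tau> F t0 c y"
    and zc: "continuous_on {c-\<tau>..d} z"
    and zi: "\<forall>t\<in>{c..d}. ((\<lambda>s. F s (seg \<tau> z s)) has_integral (z t - z c)) {c..t}"
    and zy: "\<forall>s\<in>{c-\<tau>..c}. z s = y s"
  shows "isol \<tau> F t0 d (\<lambda>t. if t \<le> c then y t else z t)"
    "\<forall>t\<in>{t0-\<tau>..c}. (\<lambda>t. if t \<le> c then y t else z t) t = y t"
    "\<forall>s\<in>{t0..c}. seg \<tau> (\<lambda>t. if t \<le> c then y t else z t) s = seg \<tau> y s" "\<forall>s\<in>{c..d}. seg \<tau> (\<lambda>t. if t \<le> c then y t else z t) s = seg \<tau> z s"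
proof -
  define w where "w = (\<lambda>t. if t \<le> c then y t else z t)"
  have yc: "continuous_on {t0-\<tau>..c} y"
    and yi: "\<forall>t\<in>{t0..c}. ((\<lambda>s. F s (seg \<tau> y s)) has_integral (y t - y t0)) {t0..t}"
    using y unfolding isol_def by auto
  have wy: "\<And>t. t \<le> c \<Longrightarrow> w t = y t" unfolding w_def by simp
  have wz: "\<And>t. t \<in> {c-\<tau>..d} \<Longrightarrow> w t = z t" unfolding w_def using zy by auto
  have agree: "\<forall>t\<in>{t0-\<tau>..c}. w t = y t" using wy by simp
  have sy: "\<forall>s\<in>{t0..c}. seg \<tau> w s = seg \<tau> y s"
    by (intro ballI seg_cong wy) auto
  have sz: "\<forall>s\<in>{c..d}. seg \<tau> w s = seg \<tau> z s"
    by (intro ballI seg_cong wz) auto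
  have c1: "continuous_on {t0-\<tau>..c} w" using yc by (rule continuous_on_eq) (simp add: wy)
  have c2: "continuous_on {c..d} w"
  proof -
    have "continuous_on {c..d} z" using tau by (intro continuous_on_subset[OF zc]) auto
    then show ?thesis by (rule continuous_on_eq) (use wz tau in auto)
  qed
  have "continuous_on ({t0-\<tau>..c} \<union> {c..d}) w" by (rule continuous_on_closed_Un[OF _ _ c1 c2]) simp_all
  moreover have "{t0-\<tau>..c} \<union> {c..d} = {t0-\<tau>..d}" using tc cd tau by auto
  ultimately have wc: "continuous_on {t0-\<tau>..d} w" by simp
  have wi: "((\<lambda>s. F s (seg \<tau> w s)) has_integral (w t - w t0)) {t0..t}" if t: "t \<in> {t0..d}" for t
  proof (cases "t \<le> c")
    case True
    have "((\<lambda>s. F s (seg \<tau> y s)) has_integral (y t - y t0)) {t0..t}" using yi t True by auto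
    then have X: "((\<lambda>s. F s (seg \<tau> w s)) has_integral (y t - y t0)) {t0..t}"
      by (rule has_integral_eq[rotated]) (use sy True in auto)
    have "w t = y t" using wy True by blast
    moreover have "w t0 = y t0" using wy tc by blast
    ultimately have e: "w t - w t0 = y t - y t0" by simp
    show ?thesis unfolding e by (rule X)
  next
    case False
    have Y1: "((\<lambda>s. F s (seg \<tau> y s)) has_integral (y c - y t0)) {t0..c}" using yi tc by simp
    have i1: "((\<lambda>s. F s (seg \<tau> w s)) has_integral (y c - y t0)) {t0..c}"
      by (rule has_integral_eq[OF _ Y1]) (use sy in auto)
    have Z1: "((\<lambda>s. F s (seg \<tau> z s)) has_integral (z t - z c)) {c..t}" using zi t False by simp
    have i2: "((\<lambda>s. F s (seg \<tau> w s)) has_integral (z t - z c)) {c..t}"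
      by (rule has_integral_eq[OF _ Z1]) (use sz t in auto)
    have C: "((\<lambda>s. F s (seg \<tau> w s)) has_integral (y c - y t0) + (z t - z c)) {t0..t}"
      using False tc by (intro has_integral_combine[OF _ _ i1 i2]) auto
    have "z c = y c" using zy tau by simp
    then have X: "((\<lambda>s. F s (seg \<tau> w s)) has_integral (z t - y t0)) {t0..t}" using C by simp
    have "w t = z t" using False unfolding w_def by simp
    moreover have "w t0 = y t0" using wy tc by blast
    ultimately have e: "w t - w t0 = z t - y t0" by simp
    show ?thesis unfolding e by (rule X)
  qed
  have "isol \<tau> F t0 d w" unfolding isol_def using wc wi by blast
  then show "isol \<tau> F t0 d (\<lambda>t. if t \<le> c then y t else z t)" "\<forall>t\<in>{t0-\<tau>..c}. (\<lambda>t. if t \<le> c then y t else z t) t = y t"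
    "\<forall>s\<in>{t0..c}. seg \<tau> (\<lambda>t. if t \<le> c then y t else z t) s = seg \<tau> y s" "\<forall>s\<in>{c..d}. seg \<tau> (\<lambda>t. if t \<le> c then y t else z t) s = seg \<tau> z s"
    using agree sy sz unfolding w_def by blast+
qed

context lfde begin

lemma m_partition:
  assumes a: "0 \<le> a" and ab: "a \<le> b" and e: "\<epsilon> > 0"
  shows "\<exists>N>0. (b - a) / real N \<le> 1 \<and>
    (\<forall>i<N. integral {a + real i * ((b - a) / real N) .. a + real (Suc i) * ((b - a) / real N)} m \<le> \<epsilon>)"
proof -
  define M where "M t = integral {a..t} m" for t
  have "continuous_on {a..b} M" unfolding M_def by (rule indefinite_integral_continuous_1[OF m_int[OF a]])
  then have "uniformly_continuous_on {a..b} M" by (rule compact_uniformly_continuous) simp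
  then obtain \<delta> where \<delta>: "\<delta> > 0" "\<forall>x\<in>{a..b}. \<forall>x'\<in>{a..b}. dist x' x < \<delta> \<longrightarrow> dist (M x') (M x) < \<epsilon>"
    using e unfolding uniformly_continuous_on_def by blast
  define \<delta>' where "\<delta>' = min \<delta> 1 / 2"
  have d': "\<delta>' > 0" "\<delta>' < \<delta>" "\<delta>' \<le> 1" using \<delta> unfolding \<delta>'_def by auto
  obtain N :: nat where N: "(b - a) / \<delta>' < real N" using reals_Archimedean2 by blast
  have "0 \<le> (b - a) / \<delta>'" using d' ab by simp
  then have Npos: "N > 0" using N by (cases N) auto
  define h where "h = (b - a) / real N"
  have h0: "0 \<le> h" unfolding h_def using ab by simp
  have hd: "h < \<delta>'" unfolding h_def using N d' Npos by (simp add: pos_divide_less_eq mult.commute)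
  have hN: "real N * h = b - a" unfolding h_def using Npos by simp
  show ?thesis
  proof (intro exI conjI allI impI)
    show "N > 0" by (rule Npos)
    show "(b - a) / real N \<le> 1" using hd d' unfolding h_def by linarith
    fix i assume i: "i < N"
    define p where "p = a + real i * h"
    define q where "q = a + real (Suc i) * h"
    have pq: "a \<le> p" "p \<le> q" "q \<le> b"
    proof -
      show "a \<le> p" unfolding p_def using h0 by simp
      show "p \<le> q" unfolding p_def q_def using h0 by (simp add: distrib_right)
      have "real (Suc i) * h \<le> real N * h" using i h0 by (intro mult_right_mono) auto
      then show "q \<le> b" unfolding q_def using hN by simp
    qed
    have "integral {a..p} m + integral {p..q} m = integral {a..q} m"
      using pq by (intro Henstock_Kurzweil_Integration.integral_combine m_int[OF a]) auto
    then have "integral {p..q} m = M q - M p" unfolding M_def by simp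
    moreover have "dist (M q) (M p) < \<epsilon>"
    proof -
      have "dist q p < \<delta>" using hd d' h0 unfolding p_def q_def dist_real_def by (simp add: algebra_simps)
      then show ?thesis using \<delta>(2) pq by auto
    qed
    ultimately show "integral {a + real i * ((b - a) / real N) .. a + real (Suc i) * ((b - a) / real N)} m \<le> \<epsilon>"
      unfolding p_def q_def h_def dist_real_def by simp
  qed
qed

lemma small_piece:
  assumes a: "0 \<le> a" "a \<le> b" and mb: "integral {a..b} m \<le> 1/2"
    and z: "continuous_on {a-\<tau>..b} z" and z0: "\<forall>s\<in>{a-\<tau>..a}. z s = 0"
    and E: "\<forall>t\<in>{a..b}. norm (z t - integral {a..t} (\<lambda>s. L s (seg \<tau> z s))) \<le> E"
  shows "\<forall>s\<in>{a-\<tau>..b}. norm (z s) \<le> 2 * E"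
proof -
  have ne: "{a-\<tau>..b} \<noteq> {}" using a tau by auto
  obtain x where x: "x \<in> {a-\<tau>..b}" "\<forall>y\<in>{a-\<tau>..b}. norm (z y) \<le> norm (z x)"
    using continuous_attains_sup[OF compact_Icc ne continuous_on_norm[OF z]] by blast
  define Z where "Z = norm (z x)"
  have Z0: "Z \<ge> 0" unfolding Z_def by simp
  have E0: "E \<ge> 0" using E a by (metis atLeastAtMost_iff norm_ge_zero order.trans order_refl)
  have bnd: "norm (z t) \<le> E + Z / 2" if t: "t \<in> {a..b}" for t
  proof -
    have "norm (integral {a..t} (\<lambda>s. L s (seg \<tau> z s))) \<le> integral {a..t} (\<lambda>s. m s * Z)"
    proof (rule integral_norm_bound_integral)
      show "(\<lambda>s. L s (seg \<tau> z s)) integrable_on {a..t}"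
        using a t by (intro L_seg_integrable continuous_on_subset[OF z]) auto
      show "(\<lambda>s. m s * Z) integrable_on {a..t}" by (intro integrable_on_mult_left m_int a)
      fix s assume s: "s \<in> {a..t}"
      show "norm (L s (seg \<tau> z s)) \<le> m s * Z"
        using s t a x unfolding Z_def
        by (intro L_seg_bound continuous_on_subset[OF z]) auto
    qed
    also have "\<dots> = integral {a..t} m * Z" by simp
    also have "\<dots> \<le> integral {a..b} m * Z"
    proof (intro mult_right_mono Z0 integral_subset_le)
      show "{a..t} \<subseteq> {a..b}" using t by auto
      show "m integrable_on {a..t}" "m integrable_on {a..b}" using m_int a by auto
      show "\<forall>x\<in>{a..b}. 0 \<le> m x" using m_nonneg a by auto
    qed
    also have "\<dots> \<le> Z / 2" using mb Z0 by (simp add: mult_right_mono[of _ "1/2" Z, simplified])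
    finally have "norm (integral {a..t} (\<lambda>s. L s (seg \<tau> z s))) \<le> Z / 2" .
    moreover have "norm (z t - integral {a..t} (\<lambda>s. L s (seg \<tau> z s))) \<le> E" using E t by blast
    ultimately show ?thesis using norm_triangle_sub[of "z t" "integral {a..t} (\<lambda>s. L s (seg \<tau> z s))"] by linarith
  qed
  have "Z \<le> E + Z / 2"
  proof (cases "x \<in> {a..b}")
    case True then show ?thesis using bnd unfolding Z_def by blast
  next
    case False
    then have "x \<in> {a-\<tau>..a}" using x by auto
    then show ?thesis using z0 E0 Z0 unfolding Z_def by simp
  qed
  then have "Z \<le> 2 * E" by simp
  then show ?thesis using x unfolding Z_def by auto
qed

end

context lfde begin

lemma local_exist:
  assumes a: "0 \<le> a" and ab: "a \<le> b" and mb: "integral {a..b} m \<le> 1/2"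
    and u: "continuous_on {a-\<tau>..a} u"
  shows "\<exists>y. continuous_on {a-\<tau>..b} y \<and> (\<forall>s\<in>{a-\<tau>..a}. y s = u s) \<and>
    (\<forall>t\<in>{a..b}. ((\<lambda>s. L s (seg \<tau> y s)) has_integral (y t - y a)) {a..t})"
proof -
  define cu where "cu s = u (max (a-\<tau>) (min a s))" for s
  have clc: "continuous_on UNIV (\<lambda>s::real. max (a-\<tau>) (min a s))"
    by (intro continuous_on_max continuous_on_min continuous_on_const continuous_on_id)
  have clr: "(\<lambda>s::real. max (a-\<tau>) (min a s)) ` UNIV \<subseteq> {a-\<tau>..a}" using tau by auto
  have cuc: "continuous_on UNIV cu" unfolding cu_def
    by (rule continuous_on_compose2[OF u clc clr])
  have "compact (u ` {a-\<tau>..a})" by (intro compact_continuous_image u compact_Icc)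
  then have bu: "bounded (u ` {a-\<tau>..a})" by (rule compact_imp_bounded)
  have "range cu \<subseteq> u ` {a-\<tau>..a}" unfolding cu_def using clr by auto
  then have cub: "bounded (range cu)" using bu bounded_subset by blast
  have cu_eq: "cu s = u s" if "s \<in> {a-\<tau>..a}" for s using that unfolding cu_def by simp
  define I where "I w r = integral {a..r} (\<lambda>s. L s (seg \<tau> (apply_bcontfun w) s))"
    for w :: "real \<Rightarrow>\<^sub>C 'a" and r
  have Iint: "(\<lambda>s. L s (seg \<tau> (apply_bcontfun w) s)) integrable_on {a..r}" for w r
    by (intro L_seg_integrable[OF a] continuous_on_apply_bcontfun)
  have Icont: "continuous_on {a..b} (I w)" for w
    unfolding I_def by (rule indefinite_integral_continuous_1[OF Iint])
  have Ia: "I w a = 0" for w unfolding I_def by simp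
  define \<Phi> where "\<Phi> w t = (if t \<le> a then cu t else u a + I w (min t b))" for w t
  have \<Phi>c: "continuous_on UNIV (\<Phi> w)" for w
  proof -
    have 1: "continuous_on {..a} (\<Phi> w)"
      using continuous_on_subset[OF cuc] by (rule continuous_on_eq) (auto simp: \<Phi>_def)
    have mc: "continuous_on {a..} (\<lambda>t. min t b)" by (intro continuous_on_min continuous_on_const continuous_on_id)
    have mr: "(\<lambda>t. min t b) ` {a..} \<subseteq> {a..b}" using ab by auto
    have "continuous_on {a..} (\<lambda>t. u a + I w (min t b))"
      by (intro continuous_on_add continuous_on_const continuous_on_compose2[OF Icont mc mr])
    then have 2: "continuous_on {a..} (\<Phi> w)"
    proof (rule continuous_on_eq)
      fix t assume "t \<in> {a..}"
      then show "u a + I w (min t b) = \<Phi> w t"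
        using Ia ab cu_eq[of a] tau unfolding \<Phi>_def by (cases "t = a") auto
    qed
    have "continuous_on ({..a} \<union> {a..}) (\<Phi> w)" by (rule continuous_on_closed_Un[OF _ _ 1 2]) simp_all
    moreover have "{..a} \<union> {a..} = (UNIV :: real set)" by auto
    ultimately show ?thesis by simp
  qed
  have \<Phi>b: "bounded (range (\<Phi> w))" for w
  proof -
    have cpt: "compact ((\<lambda>r. u a + I w r) ` {a..b})"
      by (intro compact_continuous_image continuous_on_add continuous_on_const Icont compact_Icc)
    have B: "bounded (range cu \<union> (\<lambda>r. u a + I w r) ` {a..b})"
      using cub compact_imp_bounded[OF cpt] by (simp add: bounded_Un)
    have "range (\<Phi> w) \<subseteq> range cu \<union> (\<lambda>r. u a + I w r) ` {a..b}"
    proof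
      fix z assume "z \<in> range (\<Phi> w)"
      then obtain t where t: "z = \<Phi> w t" by blast
      show "z \<in> range cu \<union> (\<lambda>r. u a + I w r) ` {a..b}"
      proof (cases "t \<le> a")
        case True then show ?thesis using t unfolding \<Phi>_def by simp
      next
        case False
        then have "min t b \<in> {a..b}" using ab by simp
        then show ?thesis using t False unfolding \<Phi>_def by simp
      qed
    qed
    then show ?thesis using B by (rule bounded_subset[rotated])
  qed
  have \<Phi>B: "\<Phi> w \<in> bcontfun" for w unfolding bcontfun_def using \<Phi>c \<Phi>b by blast
  define F where "F w = Bcontfun (\<Phi> w)" for w
  have FF: "apply_bcontfun (F w) = \<Phi> w" for w unfolding F_def using \<Phi>B by (simp add: Bcontfun_inverse)
  define X where "X = PiC UNIV (\<lambda>t. if t \<le> a then {cu t} else UNIV)"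
  have memX: "w \<in> X \<longleftrightarrow> (\<forall>t\<le>a. apply_bcontfun w t = cu t)" for w
    unfolding X_def mem_PiC_iff Pi_def by auto
  have "closed X" unfolding X_def by (rule closed_PiC) auto
  then have cX: "complete X" by (simp add: complete_eq_closed)
  have cuB: "cu \<in> bcontfun" unfolding bcontfun_def using cuc cub by blast
  have "Bcontfun cu \<in> X" unfolding memX using cuB by (simp add: Bcontfun_inverse)
  then have neX: "X \<noteq> {}" by blast
  have FX: "F ` X \<subseteq> X"
  proof
    fix z assume "z \<in> F ` X"
    then obtain w where "z = F w" by blast
    then show "z \<in> X" unfolding memX using FF by (simp add: \<Phi>_def)
  qed
  have lip: "dist (F w) (F v) \<le> 1/2 * dist w v" if "w \<in> X" "v \<in> X" for w v
  proof (rule dist_bound)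
    fix t :: real
    show "dist (apply_bcontfun (F w) t) (apply_bcontfun (F v) t) \<le> 1/2 * dist w v"
    proof (cases "t \<le> a")
      case True
      then show ?thesis unfolding FF \<Phi>_def by simp
    next
      case False
      define r where "r = min t b"
      have r: "a \<le> r" "r \<le> b" using False ab unfolding r_def by auto
      have "dist (apply_bcontfun (F w) t) (apply_bcontfun (F v) t) = norm (I w r - I v r)"
        unfolding FF \<Phi>_def r_def using False by (simp add: dist_norm)
      also have "I w r - I v r = integral {a..r} (\<lambda>s. L s (seg \<tau> (\<lambda>x. apply_bcontfun w x - apply_bcontfun v x) s))"
      proof -
        have "I w r - I v r = integral {a..r} (\<lambda>s. L s (seg \<tau> (apply_bcontfun w) s) - L s (seg \<tau> (apply_bcontfun v) s))"
          unfolding I_def by (rule integral_diff[symmetric, OF Iint Iint])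
        also have "\<dots> = integral {a..r} (\<lambda>s. L s (seg \<tau> (\<lambda>x. apply_bcontfun w x - apply_bcontfun v x) s))"
        proof (rule integral_cong)
          fix s assume "s \<in> {a..r}"
          then have s0: "s \<ge> 0" using a by auto
          show "L s (seg \<tau> (apply_bcontfun w) s) - L s (seg \<tau> (apply_bcontfun v) s) =
              L s (seg \<tau> (\<lambda>x. apply_bcontfun w x - apply_bcontfun v x) s)"
            by (rule L_seg_diff[symmetric, OF s0]) (rule continuous_on_apply_bcontfun)+
        qed
        finally show ?thesis .
      qed
      also have "norm (integral {a..r} (\<lambda>s. L s (seg \<tau> (\<lambda>x. apply_bcontfun w x - apply_bcontfun v x) s)))
          \<le> integral {a..r} (\<lambda>s. m s * dist w v)"
      proof (rule integral_norm_bound_integral)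
        show "(\<lambda>s. L s (seg \<tau> (\<lambda>x. apply_bcontfun w x - apply_bcontfun v x) s)) integrable_on {a..r}"
          by (intro L_seg_integrable[OF a] continuous_on_diff continuous_on_apply_bcontfun)
        show "(\<lambda>s. m s * dist w v) integrable_on {a..r}" by (intro integrable_on_mult_left m_int a)
        fix s assume "s \<in> {a..r}"
        then have s0: "s \<ge> 0" using a by auto
        show "norm (L s (seg \<tau> (\<lambda>x. apply_bcontfun w x - apply_bcontfun v x) s)) \<le> m s * dist w v"
        proof (rule L_seg_bound[OF s0])
          show "continuous_on {s - \<tau>..s} (\<lambda>x. apply_bcontfun w x - apply_bcontfun v x)"
            by (intro continuous_on_diff continuous_on_apply_bcontfun)
          fix x show "norm (apply_bcontfun w x - apply_bcontfun v x) \<le> dist w v"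
            using dist_bounded[of w x v] by (simp add: dist_norm)
        qed
      qed
      also have "\<dots> = integral {a..r} m * dist w v" by simp
      also have "\<dots> \<le> integral {a..b} m * dist w v"
      proof (intro mult_right_mono zero_le_dist integral_subset_le)
        show "{a..r} \<subseteq> {a..b}" using r by auto
        show "m integrable_on {a..r}" "m integrable_on {a..b}" using m_int a by auto
        show "\<forall>x\<in>{a..b}. 0 \<le> m x" using m_nonneg a by auto
      qed
      also have "\<dots> \<le> 1/2 * dist w v" using mb by (intro mult_right_mono) simp_all
      finally show ?thesis .
    qed
  qed
  obtain y where y: "y \<in> X" "F y = y"
    using Banach_fix[OF cX neX _ _ FX lip] by auto
  have yP: "apply_bcontfun y = \<Phi> y" using FF[of y] y(2) by simp
  have yt: "apply_bcontfun y t = u a + I y t" if "t \<in> {a..b}" for t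
  proof (cases "t \<le> a")
    case True
    then have "t = a" using that by auto
    then show ?thesis using yP Ia cu_eq[of a] tau unfolding \<Phi>_def by simp
  next
    case False
    then show ?thesis using yP that unfolding \<Phi>_def by simp
  qed
  show ?thesis
  proof (intro exI conjI ballI)
    show "continuous_on {a-\<tau>..b} (apply_bcontfun y)" by (rule continuous_on_apply_bcontfun)
    fix s assume "s \<in> {a-\<tau>..a}"
    then show "apply_bcontfun y s = u s" using y(1) cu_eq unfolding memX by auto
  next
    fix t assume t: "t \<in> {a..b}"
    have "apply_bcontfun y t - apply_bcontfun y a = I y t"
      using yt[OF t] yt[of a] ab Ia by simp
    then show "((\<lambda>s. L s (seg \<tau> (apply_bcontfun y) s)) has_integral
        (apply_bcontfun y t - apply_bcontfun y a)) {a..t}"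
      unfolding I_def using Iint by (simp add: integrable_integral)
  qed
qed

end

context lfde begin

lemma extL_step:
  assumes t0: "0 \<le> t0" "t0 \<le> c" "c \<le> d" and mb: "integral {c..d} m \<le> 1/2"
    and y: "isol \<tau> L t0 c y"
  shows "\<exists>w. isol \<tau> L t0 d w \<and> (\<forall>t\<in>{t0-\<tau>..c}. w t = y t)"
proof -
  have yc: "continuous_on {c-\<tau>..c} y"
    using y t0 unfolding isol_def by (auto intro: continuous_on_subset)
  obtain z where z: "continuous_on {c-\<tau>..d} z" "\<forall>s\<in>{c-\<tau>..c}. z s = y s"
     "\<forall>t\<in>{c..d}. ((\<lambda>s. L s (seg \<tau> z s)) has_integral (z t - z c)) {c..t}"
    using local_exist[OF _ t0(3) mb yc] t0 by auto
  show ?thesis using glue[OF t0(2) t0(3) tau y z(1) z(3) z(2)] by blast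
qed

lemma extL:
  assumes t0: "0 \<le> t0" "t0 \<le> c" "c \<le> d" and y: "isol \<tau> L t0 c y"
  shows "\<exists>w. isol \<tau> L t0 d w \<and> (\<forall>t\<in>{t0-\<tau>..c}. w t = y t)"
proof -
  have c0: "0 \<le> c" using t0 by simp
  obtain N where N: "N > 0" "(d - c) / real N \<le> 1"
    "\<forall>i<N. integral {c + real i * ((d - c) / real N) .. c + real (Suc i) * ((d - c) / real N)} m \<le> 1/2"
    using m_partition[OF c0 t0(3), of "1/2"] by auto
  define h where "h = (d - c) / real N"
  have h0: "0 \<le> h" unfolding h_def using t0 by simp
  have step: "\<forall>i\<le>N. \<exists>w. isol \<tau> L t0 (c + real i * h) w \<and> (\<forall>t\<in>{t0-\<tau>..c}. w t = y t)"
  proof (intro allI impI)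
    fix i show "i \<le> N \<Longrightarrow> \<exists>w. isol \<tau> L t0 (c + real i * h) w \<and> (\<forall>t\<in>{t0-\<tau>..c}. w t = y t)"
    proof (induction i)
      case 0 then show ?case using y by auto
    next
      case (Suc i)
      then obtain w where w: "isol \<tau> L t0 (c + real i * h) w" "\<forall>t\<in>{t0-\<tau>..c}. w t = y t" by auto
      have i: "i < N" using Suc by simp
      have mb: "integral {c + real i * h .. c + real (Suc i) * h} m \<le> 1/2"
        using N(3) i unfolding h_def by blast
      have "0 \<le> real i * h" using h0 by simp
      then have le1: "t0 \<le> c + real i * h" using t0 by linarith
      have le2: "c + real i * h \<le> c + real (Suc i) * h" using h0 by (simp add: distrib_right)
      obtain w' where w': "isol \<tau> L t0 (c + real (Suc i) * h) w'" "\<forall>t\<in>{t0-\<tau>..c + real i * h}. w' t = w t"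
        using extL_step[OF t0(1) le1 le2 mb w(1)] by blast
      have "\<forall>t\<in>{t0-\<tau>..c}. w' t = y t"
      proof
        fix t assume t: "t \<in> {t0-\<tau>..c}"
        then have "t \<in> {t0-\<tau>..c + real i * h}" using \<open>0 \<le> real i * h\<close> by auto
        then show "w' t = y t" using w'(2) w(2) t by auto
      qed
      then show ?case using w'(1) by blast
    qed
  qed
  have "c + real N * h = d" unfolding h_def using N(1) by simp
  then show ?thesis using step by (metis order_refl)
qed

lemma exist_globL:
  assumes t0: "0 \<le> t0" and \<phi>: "\<phi> \<in> Cspace \<tau>"
  shows "\<exists>x. globL \<tau> L t0 x \<and> seg \<tau> x t0 = \<phi>"
proof -
  define y0 where "y0 t = \<phi> (t - t0)" for t
  have "continuous_on {t0-\<tau>..t0} y0" unfolding y0_def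
    by (rule continuous_on_compose2[OF Cspace_cont[OF \<phi>]]) (auto intro!: continuous_on_diff continuous_on_id continuous_on_const)
  moreover have "\<forall>t\<in>{t0..t0}. ((\<lambda>s. L s (seg \<tau> y0 s)) has_integral (y0 t - y0 t0)) {t0..t}"
    using has_integral_refl(2) by auto
  ultimately have I0: "isol \<tau> L t0 t0 y0" unfolding isol_def by blast
  have seg0: "seg \<tau> y0 t0 = \<phi>"
    using \<phi> unfolding y0_def seg_def Cspace_def by (auto simp: fun_eq_iff)
  define Y where "Y = rec_nat y0 (\<lambda>n yn. SOME w. isol \<tau> L t0 (t0 + real (Suc n)) w \<and>
      (\<forall>t\<in>{t0-\<tau>..t0 + real n}. w t = yn t))"
  have Y0: "Y 0 = y0" unfolding Y_def by simp
  have YS: "Y (Suc n) = (SOME w. isol \<tau> L t0 (t0 + real (Suc n)) w \<and>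
      (\<forall>t\<in>{t0-\<tau>..t0 + real n}. w t = Y n t))" for n unfolding Y_def by simp
  have Ysol: "isol \<tau> L t0 (t0 + real n) (Y n) \<and> (\<forall>t\<in>{t0-\<tau>..t0 + real (n - 1)}. Y n t = Y (n - 1) t)" for n
  proof (induction n)
    case 0 then show ?case using I0 Y0 by simp
  next
    case (Suc n)
    have ex: "\<exists>w. isol \<tau> L t0 (t0 + real (Suc n)) w \<and> (\<forall>t\<in>{t0-\<tau>..t0 + real n}. w t = Y n t)"
      using Suc.IH t0 by (intro extL) auto
    show ?case unfolding YS using someI_ex[OF ex] by simp
  qed
  have agree: "\<forall>t\<in>{t0-\<tau>..t0 + real n}. Y p t = Y n t" if "n \<le> p" for n p
    using that
  proof (induction p)
    case 0 then show ?case by simp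
  next
    case (Suc p)
    show ?case
    proof (cases "n = Suc p")
      case True then show ?thesis by simp
    next
      case False
      then have "n \<le> p" using Suc.prems by simp
      then show ?thesis using Suc.IH Ysol[of "Suc p"] by auto
    qed
  qed
  define x where "x t = Y (nat \<lceil>t - t0\<rceil>) t" for t
  have xY: "x t = Y n t" if "t \<in> {t0-\<tau>..t0 + real n}" for t n
  proof -
    define q where "q = nat \<lceil>t - t0\<rceil>"
    have tq: "t \<in> {t0-\<tau>..t0 + real q}" using that unfolding q_def by (auto, linarith)
    show ?thesis
    proof (cases "q \<le> n")
      case True then show ?thesis using agree[OF True] tq unfolding x_def q_def[symmetric] by auto
    next
      case False then show ?thesis using agree[of n q] that unfolding x_def q_def[symmetric] by auto
    qed
  qed
  show ?thesis
  proof (intro exI conjI)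
    show "seg \<tau> x t0 = \<phi>"
    proof -
      have "seg \<tau> x t0 = seg \<tau> (Y 0) t0" by (rule seg_cong) (use xY[of _ 0] in auto)
      then show ?thesis using Y0 seg0 by simp
    qed
    show "globL \<tau> L t0 x" unfolding globL_def solL_def
    proof (intro allI impI conjI)
      fix T assume T: "T > t0"
      define n where "n = nat \<lceil>T - t0\<rceil>"
      have Tn: "T \<le> t0 + real n" unfolding n_def by linarith
      have In: "isol \<tau> L t0 (t0 + real n) (Y n)" using Ysol by blast
      have xe: "\<And>t. t \<in> {t0-\<tau>..t0 + real n} \<Longrightarrow> x t = Y n t" by (rule xY)
      have "continuous_on {t0-\<tau>..t0 + real n} x"
        using In unfolding isol_def by (auto intro: continuous_on_eq xe[symmetric])
      then show "continuous_on {t0-\<tau>..<T} x" by (rule continuous_on_subset) (use Tn in auto)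
      show "\<forall>t\<in>{t0..<T}. ((\<lambda>s. L s (seg \<tau> x s)) has_integral (x t - x t0)) {t0..t}"
      proof
        fix t assume t: "t \<in> {t0..<T}"
        have "((\<lambda>s. L s (seg \<tau> (Y n) s)) has_integral (Y n t - Y n t0)) {t0..t}"
          using In t Tn unfolding isol_def by auto
        moreover have "Y n t = x t" "Y n t0 = x t0" using xe t Tn tau by auto
        ultimately have X: "((\<lambda>s. L s (seg \<tau> (Y n) s)) has_integral (x t - x t0)) {t0..t}" by simp
        show "((\<lambda>s. L s (seg \<tau> x s)) has_integral (x t - x t0)) {t0..t}"
        proof (rule has_integral_eq[OF _ X])
          fix s assume s: "s \<in> {t0..t}"
          have "seg \<tau> (Y n) s = seg \<tau> x s" by (rule seg_cong) (use xe s t Tn in auto)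
          then show "L s (seg \<tau> (Y n) s) = L s (seg \<tau> x s)" by simp
        qed
      qed
    qed
  qed
qed

end

lemma has_integral_tail:
  fixes f :: "real \<Rightarrow> 'a::euclidean_space"
  assumes "(f has_integral A) {a..r}" "(f has_integral B) {a..p}" "a \<le> p" "p \<le> r"
  shows "(f has_integral (A - B)) {p..r}"
proof -
  have fi: "f integrable_on {a..r}" using assms(1) by blast
  have "f integrable_on {p..r}" by (rule integrable_on_subinterval[OF fi]) (use assms in auto)
  moreover have "integral {a..p} f + integral {p..r} f = integral {a..r} f"
    by (rule Henstock_Kurzweil_Integration.integral_combine[OF assms(3) assms(4) fi])
  moreover have "integral {a..r} f = A" "integral {a..p} f = B" using assms(1,2) by (simp_all add: integral_unique)
  ultimately show ?thesis by (metis add_diff_cancel_left' integrable_integral)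
qed

context lfde begin

lemma globL_isol:
  assumes "globL \<tau> L a y" "a \<le> r"
  shows "isol \<tau> L a r y"
proof -
  have "solL \<tau> L a (r + 1) y" using assms unfolding globL_def by simp
  then show ?thesis unfolding solL_def isol_def
    by (auto intro: continuous_on_subset)
qed

lemma globL_shift:
  assumes g: "globL \<tau> L a y" and ab: "a \<le> b"
  shows "globL \<tau> L b y"
  unfolding globL_def solL_def
proof (intro allI impI conjI ballI)
  fix T assume T: "T > b"
  have s: "solL \<tau> L a T y" using g T ab unfolding globL_def by simp
  then have "continuous_on {a-\<tau>..<T} y" unfolding solL_def by blast
  then show "continuous_on {b-\<tau>..<T} y" by (rule continuous_on_subset) (use ab in auto)
  fix t assume t: "t \<in> {b..<T}"
  have 1: "((\<lambda>s. L s (seg \<tau> y s)) has_integral (y t - y a)) {a..t}" using s t ab unfolding solL_def by auto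
  have 2: "((\<lambda>s. L s (seg \<tau> y s)) has_integral (y b - y a)) {a..b}" using s T ab unfolding solL_def by auto
  show "((\<lambda>s. L s (seg \<tau> y s)) has_integral (y t - y b)) {b..t}"
    using has_integral_tail[OF 1 2 ab] t by simp
qed

lemma globL_diff:
  assumes b: "0 \<le> b" and g1: "globL \<tau> L b y1" and g2: "globL \<tau> L b y2"
  shows "globL \<tau> L b (\<lambda>r. y1 r - y2 r)"
  unfolding globL_def solL_def
proof (intro allI impI conjI ballI)
  fix T assume T: "T > b"
  have s1: "solL \<tau> L b T y1" and s2: "solL \<tau> L b T y2" using g1 g2 T unfolding globL_def by auto
  have c1: "continuous_on {b-\<tau>..<T} y1" and c2: "continuous_on {b-\<tau>..<T} y2"
    using s1 s2 unfolding solL_def by auto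
  then show "continuous_on {b-\<tau>..<T} (\<lambda>r. y1 r - y2 r)" by (rule continuous_on_diff)
  fix t assume t: "t \<in> {b..<T}"
  have "((\<lambda>s. L s (seg \<tau> y1 s) - L s (seg \<tau> y2 s)) has_integral ((y1 t - y1 b) - (y2 t - y2 b))) {b..t}"
    using s1 s2 t unfolding solL_def by (intro has_integral_diff) auto
  then have X: "((\<lambda>s. L s (seg \<tau> y1 s) - L s (seg \<tau> y2 s)) has_integral ((y1 t - y2 t) - (y1 b - y2 b))) {b..t}"
    by (simp add: algebra_simps)
  show "((\<lambda>s. L s (seg \<tau> (\<lambda>r. y1 r - y2 r) s)) has_integral ((y1 t - y2 t) - (y1 b - y2 b))) {b..t}"
  proof (rule has_integral_eq[OF _ X])
    fix s assume s: "s \<in> {b..t}"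
    have "{s-\<tau>..s} \<subseteq> {b-\<tau>..<T}" using s t by auto
    then show "L s (seg \<tau> y1 s) - L s (seg \<tau> y2 s) = L s (seg \<tau> (\<lambda>r. y1 r - y2 r) s)"
      using s b by (intro L_seg_diff[symmetric] continuous_on_subset[OF c1] continuous_on_subset[OF c2]) auto
  qed
qed

lemma stable_bound:
  assumes "0 \<le> a" "globL \<tau> L a y" "a \<le> t"
  shows "norm (y t) \<le> k * exp (- \<alpha> * (t - a)) * cnorm \<tau> (seg \<tau> y a)"
proof -
  have "continuous_on {a-\<tau>..a} y" using globL_isol[OF assms(2) order_refl] unfolding isol_def by blast
  then have "seg \<tau> y a \<in> Cspace \<tau>" by (rule seg_in_Cspace)
  then show ?thesis using stable assms unfolding exp_stable_def by blast
qed

lemma voc_piece: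
  assumes a: "0 \<le> a" "a \<le> b" and mb: "integral {a..b} m \<le> 1/2"
    and t0a: "t0 \<le> a" and bt: "b \<le> t"
    and xc: "continuous_on {t0-\<tau>..t} x"
    and xi: "\<forall>r\<in>{t0..t}. ((\<lambda>s. L s (seg \<tau> x s) + g s) has_integral (x r - x t0)) {t0..r}"
    and G: "G integrable_on {t0..t}" "\<forall>s\<in>{t0..t}. norm (g s) \<le> G s"
    and Y: "globL \<tau> L a Y" "seg \<tau> Y a = seg \<tau> x a"
  shows "cnorm \<tau> (seg \<tau> (\<lambda>r. x r - Y r) b) \<le> 2 * integral {a..b} G"
proof -
  define z where "z r = x r - Y r" for r
  have Yi: "isol \<tau> L a b Y" by (rule globL_isol[OF Y(1) a(2)])
  have xc': "continuous_on {a-\<tau>..b} x" by (rule continuous_on_subset[OF xc]) (use t0a bt in auto)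
  have Yc: "continuous_on {a-\<tau>..b} Y" using Yi unfolding isol_def by blast
  have zc: "continuous_on {a-\<tau>..b} z" unfolding z_def by (rule continuous_on_diff[OF xc' Yc])
  have xYa: "Y r = x r" if "r \<in> {a-\<tau>..a}" for r
  proof -
    have "seg \<tau> Y a (r - a) = seg \<tau> x a (r - a)" using Y(2) by simp
    then show ?thesis using that by (simp add: seg_def)
  qed
  have z0: "\<forall>s\<in>{a-\<tau>..a}. z s = 0" unfolding z_def using xYa by simp
  have Gnn: "\<And>s. s \<in> {t0..t} \<Longrightarrow> 0 \<le> G s" using G(2) norm_ge_zero order_trans by blast
  have E: "\<forall>r\<in>{a..b}. norm (z r - integral {a..r} (\<lambda>s. L s (seg \<tau> z s))) \<le> integral {a..b} G"
  proof
    fix r assume r: "r \<in> {a..b}"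
    have X0: "((\<lambda>s. L s (seg \<tau> x s) + g s) has_integral (x r - x t0)) {t0..r}"
      using xi r t0a bt by auto
    have X0': "((\<lambda>s. L s (seg \<tau> x s) + g s) has_integral (x a - x t0)) {t0..a}"
      using xi a t0a bt by auto
    have X1: "((\<lambda>s. L s (seg \<tau> x s) + g s) has_integral (x r - x a)) {a..r}"
      using has_integral_tail[OF X0 X0' t0a] r by simp
    have Y1: "((\<lambda>s. L s (seg \<tau> Y s)) has_integral (Y r - Y a)) {a..r}"
      using Yi r unfolding isol_def by auto
    have xcr: "continuous_on {a-\<tau>..r} x" by (rule continuous_on_subset[OF xc']) (use r in auto)
    have Ycr: "continuous_on {a-\<tau>..r} Y" by (rule continuous_on_subset[OF Yc]) (use r in auto)
    have zcr: "continuous_on {a-\<tau>..r} z" by (rule continuous_on_subset[OF zc]) (use r in auto)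
    have Lz: "(\<lambda>s. L s (seg \<tau> z s)) integrable_on {a..r}" by (rule L_seg_integrable[OF a(1) zcr])
    have Lx: "(\<lambda>s. L s (seg \<tau> x s)) integrable_on {a..r}" by (rule L_seg_integrable[OF a(1) xcr])
    have "(\<lambda>s. (L s (seg \<tau> x s) + g s) - L s (seg \<tau> x s)) integrable_on {a..r}"
      using X1 Lx by (intro integrable_diff) blast+
    then have gi: "g integrable_on {a..r}" by simp
    have "z r = (x r - x a) - (Y r - Y a)" unfolding z_def using xYa[of a] tau by simp
    also have "\<dots> = integral {a..r} (\<lambda>s. (L s (seg \<tau> x s) + g s) - L s (seg \<tau> Y s))"
    proof -
      have "integral {a..r} (\<lambda>s. (L s (seg \<tau> x s) + g s) - L s (seg \<tau> Y s)) =
          integral {a..r} (\<lambda>s. L s (seg \<tau> x s) + g s) - integral {a..r} (\<lambda>s. L s (seg \<tau> Y s))"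
        using X1 Y1 by (intro integral_diff) blast+
      also have "\<dots> = (x r - x a) - (Y r - Y a)" using X1 Y1 by (simp add: integral_unique)
      finally show ?thesis by simp
    qed
    also have "\<dots> = integral {a..r} (\<lambda>s. L s (seg \<tau> z s) + g s)"
    proof (rule integral_cong)
      fix s assume s: "s \<in> {a..r}"
      have "L s (seg \<tau> z s) = L s (seg \<tau> x s) - L s (seg \<tau> Y s)" unfolding z_def
        using s a by (intro L_seg_diff continuous_on_subset[OF xcr] continuous_on_subset[OF Ycr]) auto
      then show "L s (seg \<tau> x s) + g s - L s (seg \<tau> Y s) = L s (seg \<tau> z s) + g s" by simp
    qed
    also have "\<dots> = integral {a..r} (\<lambda>s. L s (seg \<tau> z s)) + integral {a..r} g"
      by (rule integral_add[OF Lz gi])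
    finally have "z r - integral {a..r} (\<lambda>s. L s (seg \<tau> z s)) = integral {a..r} g" by simp
    moreover have "norm (integral {a..r} g) \<le> integral {a..r} G"
    proof (rule integral_norm_bound_integral[OF gi])
      show "G integrable_on {a..r}" by (rule integrable_on_subinterval[OF G(1)]) (use r t0a bt in auto)
      show "\<And>s. s \<in> {a..r} \<Longrightarrow> norm (g s) \<le> G s" using G(2) r t0a bt by auto
    qed
    moreover have "integral {a..r} G \<le> integral {a..b} G"
    proof (rule integral_subset_le)
      show "{a..r} \<subseteq> {a..b}" using r by auto
      show "G integrable_on {a..r}" by (rule integrable_on_subinterval[OF G(1)]) (use r t0a bt in auto)
      show "G integrable_on {a..b}" by (rule integrable_on_subinterval[OF G(1)]) (use t0a bt in auto)
      show "\<forall>x\<in>{a..b}. 0 \<le> G x" using Gnn t0a bt by auto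
    qed
    ultimately show "norm (z r - integral {a..r} (\<lambda>s. L s (seg \<tau> z s))) \<le> integral {a..b} G" by simp
  qed
  have "\<forall>s\<in>{a-\<tau>..b}. norm (z s) \<le> 2 * integral {a..b} G"
    by (rule small_piece[OF a mb zc z0 E])
  then have "cnorm \<tau> (seg \<tau> z b) \<le> 2 * integral {a..b} G"
    using a by (intro cnorm_seg_le[OF tau]) auto
  then show ?thesis unfolding z_def .
qed

end

context lfde begin

lemma voc:
  assumes t0: "0 \<le> t0" "t0 \<le> t"
    and xc: "continuous_on {t0-\<tau>..t} x"
    and xi: "\<forall>r\<in>{t0..t}. ((\<lambda>s. L s (seg \<tau> x s) + g s) has_integral (x r - x t0)) {t0..r}"
    and G: "G integrable_on {t0..t}" "\<forall>s\<in>{t0..t}. norm (g s) \<le> G s"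
  shows "\<exists>N>0. (t - t0) / real N \<le> 1 \<and> norm (x t) \<le> k * exp (- \<alpha> * (t - t0)) * cnorm \<tau> (seg \<tau> x t0) +
     (\<Sum>i<N. k * exp (- \<alpha> * (t - (t0 + real (Suc i) * ((t - t0) / real N)))) *
        (2 * integral {t0 + real i * ((t - t0) / real N) .. t0 + real (Suc i) * ((t - t0) / real N)} G))"
proof -
  obtain N where N: "N > 0" "(t - t0) / real N \<le> 1"
    "\<forall>i<N. integral {t0 + real i * ((t - t0) / real N) .. t0 + real (Suc i) * ((t - t0) / real N)} m \<le> 1/2"
    using m_partition[OF t0, of "1/2"] by auto
  define h where "h = (t - t0) / real N"
  define s where "s i = t0 + real i * h" for i
  have h0: "0 \<le> h" unfolding h_def using t0 by simp
  have smono: "s i \<le> s j" if "i \<le> j" for i j unfolding s_def using that h0 by (simp add: mult_right_mono)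
  have s0: "s 0 = t0" unfolding s_def by simp
  have sN: "s N = t" unfolding s_def h_def using N(1) by simp
  have sle: "t0 \<le> s i \<and> s i \<le> t" if "i \<le> N" for i using smono[of 0 i] smono[OF that] s0 sN by simp
  have mb: "integral {s i..s (Suc i)} m \<le> 1/2" if "i < N" for i using N(3) that unfolding s_def h_def by blast
  have "\<forall>i. \<exists>y. i \<le> N \<longrightarrow> globL \<tau> L (s i) y \<and> seg \<tau> y (s i) = seg \<tau> x (s i)"
  proof (intro allI)
    fix i
    show "\<exists>y. i \<le> N \<longrightarrow> globL \<tau> L (s i) y \<and> seg \<tau> y (s i) = seg \<tau> x (s i)"
    proof (cases "i \<le> N")
      case True
      have "continuous_on {s i - \<tau>..s i} x" by (rule continuous_on_subset[OF xc]) (use sle[OF True] in auto)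
      then have "seg \<tau> x (s i) \<in> Cspace \<tau>" by (rule seg_in_Cspace)
      moreover have "0 \<le> s i" using sle[OF True] t0 by simp
      ultimately show ?thesis using exist_globL by blast
    qed simp
  qed
  then obtain Y where Y: "\<And>i. i \<le> N \<Longrightarrow> globL \<tau> L (s i) (Y i) \<and> seg \<tau> (Y i) (s i) = seg \<tau> x (s i)"
    by metis
  have xt: "x t = Y N t"
  proof -
    have "seg \<tau> (Y N) (s N) 0 = seg \<tau> x (s N) 0" using Y[of N] by simp
    then show ?thesis using sN tau by (simp add: seg_def)
  qed
  have tel: "Y N t = Y 0 t + (\<Sum>i<N. Y (Suc i) t - Y i t)"
    using sum_lessThan_telescope[of "\<lambda>i. Y i t" N] by simp
  have b0: "norm (Y 0 t) \<le> k * exp (- \<alpha> * (t - t0)) * cnorm \<tau> (seg \<tau> x t0)"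
    using stable_bound[of t0 "Y 0" t] Y[of 0] s0 t0 by simp
  have bi: "norm (Y (Suc i) t - Y i t) \<le> k * exp (- \<alpha> * (t - s (Suc i))) * (2 * integral {s i..s (Suc i)} G)"
    if i: "i < N" for i
  proof -
    have Yi: "globL \<tau> L (s i) (Y i)" "seg \<tau> (Y i) (s i) = seg \<tau> x (s i)" using Y i by auto
    have YS: "globL \<tau> L (s (Suc i)) (Y (Suc i))" "seg \<tau> (Y (Suc i)) (s (Suc i)) = seg \<tau> x (s (Suc i))"
      using Y i by auto
    have sS: "t0 \<le> s (Suc i)" "s (Suc i) \<le> t" using sle[of "Suc i"] i by auto
    have si: "t0 \<le> s i" "s i \<le> s (Suc i)" using sle[of i] smono[of i "Suc i"] i by auto
    have g: "globL \<tau> L (s (Suc i)) (\<lambda>r. Y (Suc i) r - Y i r)"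
      using sS t0 by (intro globL_diff YS(1) globL_shift[OF Yi(1) si(2)]) auto
    have "norm (Y (Suc i) t - Y i t) \<le> k * exp (- \<alpha> * (t - s (Suc i))) * cnorm \<tau> (seg \<tau> (\<lambda>r. Y (Suc i) r - Y i r) (s (Suc i)))"
      using stable_bound[OF _ g sS(2)] sS t0 by simp
    also have "seg \<tau> (\<lambda>r. Y (Suc i) r - Y i r) (s (Suc i)) = seg \<tau> (\<lambda>r. x r - Y i r) (s (Suc i))"
      unfolding seg_diff YS(2) ..
    also have "k * exp (- \<alpha> * (t - s (Suc i))) * cnorm \<tau> (seg \<tau> (\<lambda>r. x r - Y i r) (s (Suc i)))
        \<le> k * exp (- \<alpha> * (t - s (Suc i))) * (2 * integral {s i..s (Suc i)} G)"
    proof (rule mult_left_mono)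
      show "0 \<le> k * exp (- \<alpha> * (t - s (Suc i)))" using k by simp
      show "cnorm \<tau> (seg \<tau> (\<lambda>r. x r - Y i r) (s (Suc i))) \<le> 2 * integral {s i..s (Suc i)} G"
        using t0 si sS by (intro voc_piece[OF _ si(2) mb[OF i] si(1) sS(2) xc xi G Yi]) auto
    qed
    finally show ?thesis .
  qed
  have "norm (x t) \<le> norm (Y 0 t) + norm (\<Sum>i<N. Y (Suc i) t - Y i t)"
    unfolding xt tel by (rule norm_triangle_ineq)
  also have "\<dots> \<le> norm (Y 0 t) + (\<Sum>i<N. norm (Y (Suc i) t - Y i t))"
    by (intro add_left_mono norm_sum)
  also have "\<dots> \<le> k * exp (- \<alpha> * (t - t0)) * cnorm \<tau> (seg \<tau> x t0) +
      (\<Sum>i<N. k * exp (- \<alpha> * (t - s (Suc i))) * (2 * integral {s i..s (Suc i)} G))"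
    by (intro add_mono b0 sum_mono bi) simp
  finally show ?thesis using N(1,2) unfolding s_def h_def by blast
qed

end

lemma geo_bound:
  fixes \<alpha> h :: real
  assumes \<alpha>: "\<alpha> > 0" and h: "0 \<le> h" "h \<le> 1"
  shows "(\<Sum>i<N. exp (- \<alpha> * (real N * h - real (Suc i) * h)) * h) \<le> exp \<alpha> / \<alpha>"
proof (cases "h = 0")
  case True
  then show ?thesis using \<alpha> by simp
next
  case False
  then have hp: "h > 0" using h by simp
  define q where "q = exp (- \<alpha> * h)"
  have q: "0 < q" "q < 1" unfolding q_def using \<alpha> hp by auto
  have eq: "exp (- \<alpha> * (real N * h - real (Suc i) * h)) = q ^ (N - Suc i)" if "i < N" for i
  proof -
    have "real N * h - real (Suc i) * h = real (N - Suc i) * h" using that by (simp add: of_nat_diff left_diff_distrib)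
    then have "- \<alpha> * (real N * h - real (Suc i) * h) = real (N - Suc i) * (- \<alpha> * h)" by simp
    then show ?thesis unfolding q_def by (simp only: exp_of_nat_mult)
  qed
  have "(\<Sum>i<N. exp (- \<alpha> * (real N * h - real (Suc i) * h)) * h) = (\<Sum>i<N. q ^ (N - Suc i)) * h"
    unfolding sum_distrib_right
  proof (rule sum.cong)
    fix i assume i: "i \<in> {..<N}"
    then have "exp (- \<alpha> * (real N * h - real (Suc i) * h)) = q ^ (N - Suc i)" using eq by simp
    then show "exp (- \<alpha> * (real N * h - real (Suc i) * h)) * h = q ^ (N - Suc i) * h" by (rule arg_cong)
  qed simp
  also have "(\<Sum>i<N. q ^ (N - Suc i)) = (\<Sum>i<N. q ^ i)" by (rule sum.nat_diff_reindex)
  also have "\<dots> = (1 - q ^ N) / (1 - q)" using q by (simp add: sum_gp_strict)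
  also have "\<dots> \<le> 1 / (1 - q)" using q by (intro divide_right_mono) auto
  finally have 1: "(\<Sum>i<N. exp (- \<alpha> * (real N * h - real (Suc i) * h)) * h) \<le> h / (1 - q)"
    using hp by (simp add: mult_right_mono)
  have "1 + \<alpha> * h \<le> exp (\<alpha> * h)" by (rule exp_ge_add_one_self)
  then have "\<alpha> * h * q \<le> 1 - q"
  proof -
    assume a: "1 + \<alpha> * h \<le> exp (\<alpha> * h)"
    have "exp (\<alpha> * h) * q = 1" unfolding q_def by (simp add: exp_minus_inverse[symmetric] exp_add[symmetric])
    then have "(1 + \<alpha> * h) * q \<le> 1" using a q by (metis mult_right_mono less_imp_le)
    then show ?thesis by (simp add: algebra_simps)
  qed
  then have "h / (1 - q) \<le> h / (\<alpha> * h * q)" using q \<alpha> hp by (intro divide_left_mono) auto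
  also have "\<dots> = 1 / (\<alpha> * q)" using hp by simp
  also have "\<dots> = exp (\<alpha> * h) / \<alpha>" unfolding q_def by (simp add: exp_minus field_simps)
  also have "\<dots> \<le> exp \<alpha> / \<alpha>" using \<alpha> h by (intro divide_right_mono) auto
  finally show ?thesis using 1 by simp
qed

context lfde begin

lemma voc_const:
  assumes t0: "0 \<le> t0" "t0 \<le> t"
    and xc: "continuous_on {t0-\<tau>..t} x"
    and xi: "\<forall>r\<in>{t0..t}. ((\<lambda>s. L s (seg \<tau> x s) + g s) has_integral (x r - x t0)) {t0..r}"
    and B: "0 \<le> B" "\<forall>s\<in>{t0..t}. norm (g s) \<le> B"
  shows "norm (x t) \<le> k * exp (- \<alpha> * (t - t0)) * cnorm \<tau> (seg \<tau> x t0) + 2 * k * B * exp \<alpha> / \<alpha>"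
proof -
  obtain N where N: "N > 0" "(t - t0) / real N \<le> 1"
    "norm (x t) \<le> k * exp (- \<alpha> * (t - t0)) * cnorm \<tau> (seg \<tau> x t0) +
     (\<Sum>i<N. k * exp (- \<alpha> * (t - (t0 + real (Suc i) * ((t - t0) / real N)))) *
        (2 * integral {t0 + real i * ((t - t0) / real N) .. t0 + real (Suc i) * ((t - t0) / real N)} (\<lambda>_. B)))"
    using voc[OF t0 xc xi, of "\<lambda>_. B"] B integrable_const_ivl by blast
  define h where "h = (t - t0) / real N"
  have h: "0 \<le> h" "h \<le> 1" unfolding h_def using N t0 by auto
  have tN: "t - t0 = real N * h" unfolding h_def using N by simp
  have "(\<Sum>i<N. k * exp (- \<alpha> * (t - (t0 + real (Suc i) * h))) *
        (2 * integral {t0 + real i * h .. t0 + real (Suc i) * h} (\<lambda>_. B)))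
      = 2 * k * B * (\<Sum>i<N. exp (- \<alpha> * (real N * h - real (Suc i) * h)) * h)"
  proof -
    have I: "integral {t0 + real i * h .. t0 + real (Suc i) * h} (\<lambda>_. B) = h * B" for i
      using h by (simp add: distrib_right)
    have T: "t - (t0 + real (Suc i) * h) = real N * h - real (Suc i) * h" for i using tN by simp
    have "(\<Sum>i<N. k * exp (- \<alpha> * (t - (t0 + real (Suc i) * h))) *
        (2 * integral {t0 + real i * h .. t0 + real (Suc i) * h} (\<lambda>_. B)))
      = (\<Sum>i<N. 2 * k * B * (exp (- \<alpha> * (real N * h - real (Suc i) * h)) * h))"
    proof (rule sum.cong[OF refl])
      fix i show "k * exp (- \<alpha> * (t - (t0 + real (Suc i) * h))) *
        (2 * integral {t0 + real i * h .. t0 + real (Suc i) * h} (\<lambda>_. B))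
        = 2 * k * B * (exp (- \<alpha> * (real N * h - real (Suc i) * h)) * h)"
        unfolding I T by (simp add: mult_ac)
    qed
    then show ?thesis by (simp add: sum_distrib_left)
  qed
  also have "\<dots> \<le> 2 * k * B * (exp \<alpha> / \<alpha>)"
    using k B \<alpha> h by (intro mult_left_mono geo_bound) auto
  finally show ?thesis using N(3) unfolding h_def by simp
qed

lemma sum_integral_partition:
  fixes G :: "real \<Rightarrow> real"
  assumes G: "G integrable_on {a..a + real N * h}" and h: "0 \<le> h"
  shows "(\<Sum>i<N. integral {a + real i * h .. a + real (Suc i) * h} G) = integral {a .. a + real N * h} G"
proof -
  have "n \<le> N \<Longrightarrow> (\<Sum>i<n. integral {a + real i * h .. a + real (Suc i) * h} G) = integral {a .. a + real n * h} G" for n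
  proof (induction n)
    case 0 then show ?case by simp
  next
    case (Suc n)
    have le1: "a \<le> a + real n * h" using h by simp
    have le2: "a + real n * h \<le> a + real (Suc n) * h" using h by (simp add: distrib_right)
    have le3: "a + real (Suc n) * h \<le> a + real N * h" using h Suc.prems by (simp add: mult_right_mono)
    have Gi: "G integrable_on {a .. a + real (Suc n) * h}"
      by (rule integrable_on_subinterval[OF G]) (use le3 in auto)
    have "integral {a .. a + real n * h} G + integral {a + real n * h .. a + real (Suc n) * h} G = integral {a .. a + real (Suc n) * h} G"
      by (rule Henstock_Kurzweil_Integration.integral_combine[OF le1 le2 Gi])
    then show ?case using Suc by simp
  qed
  then show ?thesis by simp
qed

lemma voc_int:
  assumes t0: "0 \<le> t0" "t0 \<le> t"
    and xc: "continuous_on {t0-\<tau>..t} x"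
    and xi: "\<forall>r\<in>{t0..t}. ((\<lambda>s. L s (seg \<tau> x s) + g s) has_integral (x r - x t0)) {t0..r}"
    and G: "G integrable_on {t0..t}" "\<forall>s\<in>{t0..t}. norm (g s) \<le> G s"
  shows "norm (x t) \<le> k * exp (- \<alpha> * (t - t0)) * cnorm \<tau> (seg \<tau> x t0) + 2 * k * integral {t0..t} G"
proof -
  obtain N where N: "N > 0" "(t - t0) / real N \<le> 1"
    "norm (x t) \<le> k * exp (- \<alpha> * (t - t0)) * cnorm \<tau> (seg \<tau> x t0) +
     (\<Sum>i<N. k * exp (- \<alpha> * (t - (t0 + real (Suc i) * ((t - t0) / real N)))) *
        (2 * integral {t0 + real i * ((t - t0) / real N) .. t0 + real (Suc i) * ((t - t0) / real N)} G))"
    using voc[OF t0 xc xi G] by blast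
  define h where "h = (t - t0) / real N"
  have h: "0 \<le> h" unfolding h_def using N t0 by auto
  have tN: "t0 + real N * h = t" unfolding h_def using N by simp
  have Gnn: "\<And>s. s \<in> {t0..t} \<Longrightarrow> 0 \<le> G s" using G(2) norm_ge_zero order_trans by blast
  have "(\<Sum>i<N. k * exp (- \<alpha> * (t - (t0 + real (Suc i) * h))) * (2 * integral {t0 + real i * h .. t0 + real (Suc i) * h} G))
      \<le> (\<Sum>i<N. k * (2 * integral {t0 + real i * h .. t0 + real (Suc i) * h} G))"
  proof (rule sum_mono)
    fix i assume i: "i \<in> {..<N}"
    have le: "t0 + real (Suc i) * h \<le> t" using i h tN[symmetric] by (simp add: mult_right_mono)
    have le0: "t0 + real i * h \<le> t0 + real (Suc i) * h" using h by (simp add: distrib_right)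
    have ih: "0 \<le> real i * h" using h by simp
    have "0 \<le> integral {t0 + real i * h .. t0 + real (Suc i) * h} G"
    proof (rule integral_nonneg)
      show "G integrable_on {t0 + real i * h .. t0 + real (Suc i) * h}"
        by (rule integrable_on_subinterval[OF G(1)]) (use le h in auto)
      show "\<And>x. x \<in> {t0 + real i * h .. t0 + real (Suc i) * h} \<Longrightarrow> 0 \<le> G x"
      proof -
        fix x assume "x \<in> {t0 + real i * h .. t0 + real (Suc i) * h}"
        then have "x \<in> {t0..t}" using le ih by auto
        then show "0 \<le> G x" by (rule Gnn)
      qed
    qed
    moreover have "exp (- \<alpha> * (t - (t0 + real (Suc i) * h))) \<le> 1" using le \<alpha> by simp
    ultimately have "exp (- \<alpha> * (t - (t0 + real (Suc i) * h))) * (2 * integral {t0 + real i * h .. t0 + real (Suc i) * h} G)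
      \<le> 1 * (2 * integral {t0 + real i * h .. t0 + real (Suc i) * h} G)"
      by (intro mult_right_mono) auto
    then show "k * exp (- \<alpha> * (t - (t0 + real (Suc i) * h))) * (2 * integral {t0 + real i * h .. t0 + real (Suc i) * h} G)
      \<le> k * (2 * integral {t0 + real i * h .. t0 + real (Suc i) * h} G)"
      using k by (simp add: mult.assoc)
  qed
  also have "\<dots> = 2 * k * (\<Sum>i<N. integral {t0 + real i * h .. t0 + real (Suc i) * h} G)"
    by (simp add: sum_distrib_left mult_ac)
  also have "(\<Sum>i<N. integral {t0 + real i * h .. t0 + real (Suc i) * h} G) = integral {t0..t} G"
    using sum_integral_partition[of G t0 N h] G(1) h tN by simp
  finally show ?thesis using N(3) unfolding h_def by simp
qed

end

lemma exp_small:
  fixes \<alpha> k c \<epsilon> a :: real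
  assumes "\<alpha> > 0" "k > 0" "c \<ge> 0" "\<epsilon> > 0"
  shows "\<exists>T. \<forall>t\<ge>T. k * exp (- \<alpha> * (t - a)) * c < \<epsilon>"
proof -
  define C where "C = (k * c + 1) / \<epsilon>"
  have C: "C > 0" unfolding C_def using assms by (simp add: add_nonneg_pos)
  show ?thesis
  proof (intro exI allI impI)
    fix t assume t: "a + ln C / \<alpha> \<le> t"
    then have "ln C \<le> \<alpha> * (t - a)" using assms(1) by (simp add: field_simps)
    then have "exp (- \<alpha> * (t - a)) \<le> exp (- ln C)" by simp
    also have "\<dots> = \<epsilon> / (k * c + 1)" using C by (simp add: exp_minus C_def)
    finally have e: "exp (- \<alpha> * (t - a)) \<le> \<epsilon> / (k * c + 1)" .
    have "k * exp (- \<alpha> * (t - a)) * c = (k * c) * exp (- \<alpha> * (t - a))" by simp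
    also have "\<dots> \<le> (k * c) * (\<epsilon> / (k * c + 1))" using e assms by (intro mult_left_mono) auto
    also have "\<dots> < \<epsilon>"
    proof -
      have "(k * c) * (\<epsilon> / (k * c + 1)) = \<epsilon> * ((k * c) / (k * c + 1))" by simp
      also have "(k * c) / (k * c + 1) < 1"
      proof -
        have "0 \<le> k * c" using assms by simp
        then show ?thesis by (simp add: divide_less_eq)
      qed
      then have "\<epsilon> * ((k * c) / (k * c + 1)) < \<epsilon> * 1" using assms(4) by (intro mult_strict_left_mono) auto
      finally show ?thesis by simp
    qed
    finally show "k * exp (- \<alpha> * (t - a)) * c < \<epsilon>" .
  qed
qed

lemma tail_small:
  fixes \<beta> :: "real \<Rightarrow> real"
  assumes \<beta>0: "\<forall>t\<ge>0. \<beta> t \<ge> 0" and \<beta>i: "set_integrable lborel {0..} \<beta>" and e: "\<epsilon> > 0"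
  shows "\<exists>T\<ge>0. \<forall>T'\<ge>T. \<forall>b. integral {T'..b} \<beta> \<le> \<epsilon>"
proof -
  have i0: "\<beta> integrable_on {0..}" by (rule set_borel_integral_eq_integral(1)[OF \<beta>i])
  have ii: "\<beta> integrable_on {a..b}" if "0 \<le> a" for a b
  proof (cases "a \<le> b")
    case True
    have sub: "{a..b} \<subseteq> {0..}" using that by auto
    have "set_integrable lborel {a..b} \<beta>" using set_integrable_subset[OF \<beta>i _ sub] by simp
    then show ?thesis by (rule set_borel_integral_eq_integral(1))
  next
    case False then show ?thesis by (simp add: integrable_on_empty)
  qed
  define I where "I b = integral {0..b} \<beta>" for b
  have Ib: "I b \<le> integral {0..} \<beta>" if "0 \<le> b" for b
    unfolding I_def using ii i0 \<beta>0 by (intro integral_subset_le) auto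
  have bdd: "bdd_above (I ` {0..})" using Ib by (intro bdd_aboveI2) auto
  define Sp where "Sp = (SUP b\<in>{0..}. I b)"
  have "Sp - \<epsilon> < Sp" using e by simp
  then obtain T where T: "T \<in> {0..}" "Sp - \<epsilon> < I T" unfolding Sp_def using less_cSUP_iff[OF _ bdd] by auto
  show ?thesis
  proof (intro exI conjI allI impI)
    show "0 \<le> T" using T by simp
    fix T' b assume T': "T \<le> T'"
    show "integral {T'..b} \<beta> \<le> \<epsilon>"
    proof (cases "T' \<le> b")
      case False then show ?thesis using e by simp
    next
      case True
      have "integral {0..T} \<beta> + integral {T..b} \<beta> = integral {0..b} \<beta>"
        using T T' True by (intro Henstock_Kurzweil_Integration.integral_combine ii) auto
      moreover have "integral {T'..b} \<beta> \<le> integral {T..b} \<beta>"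
        using T T' True ii \<beta>0 by (intro integral_subset_le) auto
      moreover have "I b \<le> Sp" unfolding Sp_def using bdd T T' True by (intro cSUP_upper) auto
      ultimately show ?thesis using T unfolding I_def by linarith
    qed
  qed
qed

locale pfde = lfde \<tau> L m k \<alpha>
  for \<tau> :: real and L :: "real \<Rightarrow> (real \<Rightarrow> 'a::euclidean_space) \<Rightarrow> 'a" and m k \<alpha> +
  fixes f :: "real \<Rightarrow> (real \<Rightarrow> 'a) \<Rightarrow> 'a" and S :: "(real \<Rightarrow> 'a) set"
  assumes S_sub: "S \<subseteq> Cspace \<tau>"
    and inv: "pos_invariant \<tau> L f S"
begin

lemma solP_voc:
  assumes "solP \<tau> L f S t0 T x" "t \<in> {t0..<T}" "t1 \<in> {t0..t}"
  shows "continuous_on {t1-\<tau>..t} x"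
    "\<forall>r\<in>{t1..t}. ((\<lambda>s. L s (seg \<tau> x s) + f s (seg \<tau> x s)) has_integral (x r - x t1)) {t1..r}"
    "\<forall>s\<in>{t1..t}. seg \<tau> x s \<in> S"
proof -
  have c: "continuous_on {t0-\<tau>..<T} x" and i: "\<forall>r\<in>{t0..<T}. ((\<lambda>s. L s (seg \<tau> x s) + f s (seg \<tau> x s)) has_integral (x r - x t0)) {t0..r}"
    and sS: "\<forall>r\<in>{t0..<T}. seg \<tau> x r \<in> S"
    using assms(1) unfolding solP_def by auto
  show "continuous_on {t1-\<tau>..t} x" by (rule continuous_on_subset[OF c]) (use assms in auto)
  show "\<forall>s\<in>{t1..t}. seg \<tau> x s \<in> S" using sS assms by auto
  show "\<forall>r\<in>{t1..t}. ((\<lambda>s. L s (seg \<tau> x s) + f s (seg \<tau> x s)) has_integral (x r - x t1)) {t1..r}"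
  proof
    fix r assume r: "r \<in> {t1..t}"
    have 1: "((\<lambda>s. L s (seg \<tau> x s) + f s (seg \<tau> x s)) has_integral (x r - x t0)) {t0..r}" using i r assms by auto
    have 2: "((\<lambda>s. L s (seg \<tau> x s) + f s (seg \<tau> x s)) has_integral (x t1 - x t0)) {t0..t1}" using i assms by auto
    show "((\<lambda>s. L s (seg \<tau> x s) + f s (seg \<tau> x s)) has_integral (x r - x t1)) {t1..r}"
      using has_integral_tail[OF 1 2] r assms by simp
  qed
qed

lemma part1_diss:
  assumes B: "\<forall>t\<ge>0. \<forall>\<phi>\<in>S. norm (f t \<phi>) \<le> B" and t0: "0 \<le> t0" and x: "globP \<tau> L f S t0 x"
  shows "Limsup at_top (\<lambda>t. ereal (norm (x t))) \<le> ereal (2 * k * max B 0 * exp \<alpha> / \<alpha> + 1)"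
proof (rule Limsup_bounded)
  define c where "c = cnorm \<tau> (seg \<tau> x t0)"
  have "solP \<tau> L f S t0 (t0 + 1) x" using x unfolding globP_def by simp
  then have "continuous_on {t0-\<tau>..t0} x" using solP_voc(1)[of t0 "t0+1" x t0 t0] by simp
  then have c0: "c \<ge> 0" unfolding c_def using tau by (intro cnorm_nonneg seg_cont) auto
  obtain T where T: "\<forall>t\<ge>T. k * exp (- \<alpha> * (t - t0)) * c < 1" using exp_small[OF \<alpha> k c0, of 1] by auto
  show "\<forall>\<^sub>F t in at_top. ereal (norm (x t)) \<le> ereal (2 * k * max B 0 * exp \<alpha> / \<alpha> + 1)"
    unfolding eventually_at_top_linorder
  proof (intro exI allI impI)
    fix t assume t: "max T t0 \<le> t"
    have sol: "solP \<tau> L f S t0 (t + 1) x" using x t unfolding globP_def by simp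
    have tt: "t \<in> {t0..<t+1}" "t0 \<in> {t0..t}" using t by auto
    have "norm (x t) \<le> k * exp (- \<alpha> * (t - t0)) * c + 2 * k * max B 0 * exp \<alpha> / \<alpha>"
      unfolding c_def
    proof (rule voc_const[OF t0 _ solP_voc(1)[OF sol tt] solP_voc(2)[OF sol tt]])
      show "t0 \<le> t" using t by simp
      show "0 \<le> max B 0" by simp
      show "\<forall>s\<in>{t0..t}. norm (f s (seg \<tau> x s)) \<le> max B 0"
      proof
        fix s assume s: "s \<in> {t0..t}"
        then have "seg \<tau> x s \<in> S" "s \<ge> 0" using solP_voc(3)[OF sol tt] t0 by auto
        then have "norm (f s (seg \<tau> x s)) \<le> B" using B by blast
        then show "norm (f s (seg \<tau> x s)) \<le> max B 0" by simp
      qed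
    qed
    moreover have "k * exp (- \<alpha> * (t - t0)) * c < 1" using T t by simp
    ultimately show "ereal (norm (x t)) \<le> ereal (2 * k * max B 0 * exp \<alpha> / \<alpha> + 1)" by simp
  qed
qed

lemma set_int_ivl:
  fixes \<beta> :: "real \<Rightarrow> real"
  assumes \<beta>i: "set_integrable lborel {0..} \<beta>" and a: "0 \<le> a"
  shows "\<beta> integrable_on {a..b}"
proof (cases "a \<le> b")
  case True
  have sub: "{a..b} \<subseteq> {0..}" using a by auto
  have "set_integrable lborel {a..b} \<beta>" using set_integrable_subset[OF \<beta>i _ sub] by simp
  then show ?thesis by (rule set_borel_integral_eq_integral(1))
next
  case False then show ?thesis by (simp add: integrable_on_empty)
qed

lemma voc_beta:
  assumes \<beta>0: "\<forall>t\<ge>0. \<beta> t \<ge> 0" and \<beta>i: "set_integrable lborel {0..} \<beta>"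
    and fb: "\<forall>t\<ge>T0. \<forall>\<phi>\<in>S. norm (f t \<phi>) \<le> \<beta> t * cnorm \<tau> \<phi>"
    and t1: "0 \<le> t0" "t0 \<le> t1" "t1 \<le> t" "T0 \<le> t1" and x: "globP \<tau> L f S t0 x"
    and Z: "\<forall>r\<in>{t1-\<tau>..t}. norm (x r) \<le> Z"
  shows "norm (x t) \<le> k * exp (- \<alpha> * (t - t1)) * cnorm \<tau> (seg \<tau> x t1) + 2 * k * Z * integral {t1..t} \<beta>"
proof -
  have sol: "solP \<tau> L f S t0 (t + 1) x" using x t1 unfolding globP_def by simp
  have tt: "t \<in> {t0..<t+1}" "t1 \<in> {t0..t}" using t1 by auto
  have t10: "0 \<le> t1" using t1 by simp
  have Gi: "(\<lambda>s. \<beta> s * Z) integrable_on {t1..t}" by (intro integrable_on_mult_left set_int_ivl[OF \<beta>i t10])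
  have "norm (x t) \<le> k * exp (- \<alpha> * (t - t1)) * cnorm \<tau> (seg \<tau> x t1) + 2 * k * integral {t1..t} (\<lambda>s. \<beta> s * Z)"
  proof (rule voc_int[OF t10 t1(3) solP_voc(1)[OF sol tt] solP_voc(2)[OF sol tt] Gi], rule ballI)
    fix s assume s: "s \<in> {t1..t}"
    have sS: "seg \<tau> x s \<in> S" using solP_voc(3)[OF sol tt] s by auto
    have "norm (f s (seg \<tau> x s)) \<le> \<beta> s * cnorm \<tau> (seg \<tau> x s)" using fb sS s t1 by auto
    also have "\<dots> \<le> \<beta> s * Z"
    proof (rule mult_left_mono)
      show "0 \<le> \<beta> s" using \<beta>0 s t1 by auto
      show "cnorm \<tau> (seg \<tau> x s) \<le> Z" using Z s by (intro cnorm_seg_le[OF tau]) auto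
    qed
    finally show "norm (f s (seg \<tau> x s)) \<le> \<beta> s * Z" .
  qed
  also have "integral {t1..t} (\<lambda>s. \<beta> s * Z) = integral {t1..t} \<beta> * Z" by simp
  finally show ?thesis by (simp add: mult_ac)
qed

lemma part2:
  assumes \<beta>0: "\<forall>t\<ge>0. \<beta> t \<ge> 0" and \<beta>i: "set_integrable lborel {0..} \<beta>"
    and fb: "\<forall>t\<ge>T0. \<forall>\<phi>\<in>S. norm (f t \<phi>) \<le> \<beta> t * cnorm \<tau> \<phi>"
    and t0: "0 \<le> t0" and x: "globP \<tau> L f S t0 x"
  shows "(x \<longlongrightarrow> 0) at_top"
proof -
  have xc: "continuous_on {a-\<tau>..b} x" if "t0 \<le> a" for a b
  proof -
    have "solP \<tau> L f S t0 (max b t0 + 1) x" using x unfolding globP_def by simp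
    then have "continuous_on {t0-\<tau>..<max b t0 + 1} x" unfolding solP_def by blast
    then show ?thesis by (rule continuous_on_subset) (use that in auto)
  qed
  have k4: "1 / (4 * k) > 0" using k by simp
  obtain Ta where Ta: "Ta \<ge> 0" "\<forall>T'\<ge>Ta. \<forall>b. integral {T'..b} \<beta> \<le> 1 / (4 * k)"
    using tail_small[OF \<beta>0 \<beta>i k4] by blast
  define t1 where "t1 = max (max Ta T0) t0"
  have t1: "0 \<le> t0" "t0 \<le> t1" "T0 \<le> t1" "Ta \<le> t1" unfolding t1_def using t0 by auto
  define c1 where "c1 = cnorm \<tau> (seg \<tau> x t1)"
  have xc1: "continuous_on {t1-\<tau>..t1} x" by (rule xc) (use t1 in auto)
  have c10: "0 \<le> c1" unfolding c1_def by (rule cnorm_nonneg[OF tau seg_cont[OF xc1]])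
  define K where "K = 2 * max k 1 * c1"
  have c1K: "c1 \<le> K" unfolding K_def using c10 by (simp add: mult_right_mono[of 1 "2 * max k 1" c1, simplified])
  have K0: "0 \<le> K" using c10 c1K by linarith
  have bndK: "\<forall>r\<in>{t1-\<tau>..t}. norm (x r) \<le> K" if t: "t1 \<le> t" for t
  proof -
    have ne: "{t1-\<tau>..t} \<noteq> {}" using t tau by auto
    have xct: "continuous_on {t1-\<tau>..t} x" by (rule xc) (use t1 in auto)
    obtain r where r: "r \<in> {t1-\<tau>..t}" "\<forall>y\<in>{t1-\<tau>..t}. norm (x y) \<le> norm (x r)"
      using continuous_attains_sup[OF compact_Icc ne continuous_on_norm[OF xct]] by blast
    have "norm (x r) \<le> K"
    proof (cases "r \<le> t1")
      case True
      then have "norm (x r) \<le> c1" unfolding c1_def using r by (intro norm_le_cnorm_seg[OF xc1]) auto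
      then show ?thesis using c1K by simp
    next
      case False
      have "norm (x r) \<le> k * exp (- \<alpha> * (r - t1)) * c1 + 2 * k * norm (x r) * integral {t1..r} \<beta>"
        unfolding c1_def using False r t1
        by (intro voc_beta[OF \<beta>0 \<beta>i fb t1(1,2) _ t1(3) x]) auto
      also have "k * exp (- \<alpha> * (r - t1)) * c1 \<le> k * 1 * c1"
        using False k c10 \<alpha> by (intro mult_right_mono mult_left_mono) auto
      also have "2 * k * norm (x r) * integral {t1..r} \<beta> \<le> 2 * k * norm (x r) * (1 / (4 * k))"
        using Ta t1 k by (intro mult_left_mono) auto
      also have "2 * k * norm (x r) * (1 / (4 * k)) = norm (x r) / 2" using k by simp
      finally have "norm (x r) \<le> 2 * k * c1" by simp
      also have "\<dots> \<le> K" unfolding K_def using c10 by (intro mult_right_mono) auto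
      finally show ?thesis .
    qed
    then show ?thesis using r by auto
  qed
  have allK: "norm (x r) \<le> K" if "t1 - \<tau> \<le> r" for r
    using bndK[of "max r t1"] that by auto
  show ?thesis unfolding tendsto_iff
  proof (intro allI impI)
    fix \<epsilon> :: real assume e: "\<epsilon> > 0"
    define \<epsilon>' where "\<epsilon>' = \<epsilon> / (4 * k * (K + 1))"
    have e': "\<epsilon>' > 0" unfolding \<epsilon>'_def using e k K0 by (simp add: add_nonneg_pos)
    obtain Tb where Tb: "Tb \<ge> 0" "\<forall>T'\<ge>Tb. \<forall>b. integral {T'..b} \<beta> \<le> \<epsilon>'"
      using tail_small[OF \<beta>0 \<beta>i e'] by blast
    define t2 where "t2 = max Tb t1"
    have e2: "\<epsilon> / 2 > 0" using e by simp
    obtain T3 where T3: "\<forall>t\<ge>T3. k * exp (- \<alpha> * (t - t2)) * K < \<epsilon> / 2"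
      using exp_small[OF \<alpha> k K0 e2] by blast
    show "\<forall>\<^sub>F t in at_top. dist (x t) 0 < \<epsilon>"
      unfolding eventually_at_top_linorder
    proof (intro exI allI impI)
      fix t assume t: "max T3 t2 \<le> t"
      have t2': "t0 \<le> t2" "t2 \<le> t" "T0 \<le> t2" using t t1 unfolding t2_def by auto
      have Zb: "\<forall>r\<in>{t2-\<tau>..t}. norm (x r) \<le> K" using allK t1 unfolding t2_def by auto
      have "norm (x t) \<le> k * exp (- \<alpha> * (t - t2)) * cnorm \<tau> (seg \<tau> x t2) + 2 * k * K * integral {t2..t} \<beta>"
        by (rule voc_beta[OF \<beta>0 \<beta>i fb t0 t2'(1) t2'(2) t2'(3) x Zb])
      also have "k * exp (- \<alpha> * (t - t2)) * cnorm \<tau> (seg \<tau> x t2) \<le> k * exp (- \<alpha> * (t - t2)) * K"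
        using k allK t1 unfolding t2_def by (intro mult_left_mono cnorm_seg_le[OF tau]) auto
      also have "2 * k * K * integral {t2..t} \<beta> \<le> 2 * k * K * \<epsilon>'"
        using Tb k K0 unfolding t2_def by (intro mult_left_mono) auto
      also have "2 * k * K * \<epsilon>' \<le> \<epsilon> / 2"
      proof -
        have pos: "4 * k * (K + 1) > 0" using k K0 by (simp add: add_nonneg_pos)
        have nz: "K + 1 \<noteq> 0" "k \<noteq> 0" using k K0 by auto
        have eq: "\<epsilon>' * (4 * k * (K + 1)) = \<epsilon>" unfolding \<epsilon>'_def using nz by simp
        have "2 * k * K * \<epsilon>' \<le> 2 * k * (K + 1) * \<epsilon>'" using k e' by (intro mult_right_mono mult_left_mono) auto
        also have "2 * k * (K + 1) * \<epsilon>' = (\<epsilon>' * (4 * k * (K + 1))) / 2" by (simp add: field_simps)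
        finally show ?thesis using eq by simp
      qed
      finally have "norm (x t) \<le> k * exp (- \<alpha> * (t - t2)) * K + \<epsilon> / 2" by simp
      moreover have "k * exp (- \<alpha> * (t - t2)) * K < \<epsilon> / 2" using T3 t by simp
      ultimately show "dist (x t) 0 < \<epsilon>" by simp
    qed
  qed
qed

end

context pfde begin

lemma solP_mono:
  assumes "solP \<tau> L f S t0 U y" "U' \<le> U"
  shows "solP \<tau> L f S t0 U' y"
  using assms unfolding solP_def by (auto intro: continuous_on_subset)

lemma solP_cong:
  assumes "solP \<tau> L f S t0 U z" "\<forall>t\<in>{t0-\<tau>..<U}. y t = z t"
  shows "solP \<tau> L f S t0 U y"
proof -
  have c: "continuous_on {t0-\<tau>..<U} z" and sS: "\<forall>t\<in>{t0..<U}. seg \<tau> z t \<in> S"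
    and i: "\<forall>t\<in>{t0..<U}. ((\<lambda>s. L s (seg \<tau> z s) + f s (seg \<tau> z s)) has_integral (z t - z t0)) {t0..t}"
    using assms(1) unfolding solP_def by auto
  have sg: "seg \<tau> y s = seg \<tau> z s" if "s \<in> {t0..<U}" for s
    by (rule seg_cong) (use assms(2) that in auto)
  show ?thesis unfolding solP_def
  proof (intro conjI ballI)
    show "continuous_on {t0-\<tau>..<U} y" using c by (rule continuous_on_eq) (use assms(2) in auto)
    fix t assume t: "t \<in> {t0..<U}"
    show "seg \<tau> y t \<in> S" using sS sg t by simp
    have X: "((\<lambda>s. L s (seg \<tau> z s) + f s (seg \<tau> z s)) has_integral (y t - y t0)) {t0..t}"
      using i t assms(2) tau by auto
    show "((\<lambda>s. L s (seg \<tau> y s) + f s (seg \<tau> y s)) has_integral (y t - y t0)) {t0..t}"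
      by (rule has_integral_eq[OF _ X]) (use sg t in auto)
  qed
qed

lemma extP:
  assumes B: "\<forall>t\<ge>0. \<forall>\<phi>\<in>S. norm (f t \<phi>) \<le> B" and t0: "0 \<le> t0" "t0 < T" and x: "solP \<tau> L f S t0 T x"
  shows "\<exists>T'>T. \<exists>y. solP \<tau> L f S t0 T' y \<and> (\<forall>t\<in>{t0-\<tau>..<T}. y t = x t)"
proof -
  define F where "F s \<phi> = L s \<phi> + f s \<phi>" for s \<phi>
  define B' where "B' = max B 0"
  have xc: "continuous_on {t0-\<tau>..<T} x" and xS: "\<forall>t\<in>{t0..<T}. seg \<tau> x t \<in> S"
    and xi: "\<forall>t\<in>{t0..<T}. ((\<lambda>s. F s (seg \<tau> x s)) has_integral (x t - x t0)) {t0..t}"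
    using x unfolding solP_def F_def by auto
  define c0 where "c0 = cnorm \<tau> (seg \<tau> x t0)"
  have xc0: "continuous_on {t0-\<tau>..t0} x" by (rule continuous_on_subset[OF xc]) (use t0 in auto)
  have c00: "0 \<le> c0" unfolding c0_def by (rule cnorm_nonneg[OF tau seg_cont[OF xc0]])
  define K where "K = c0 + k * c0 + 2 * k * B' * exp \<alpha> / \<alpha>"
  have fB: "norm (f s (seg \<tau> x s)) \<le> B'" if "s \<in> {t0..<T}" for s
  proof -
    have "seg \<tau> x s \<in> S" "s \<ge> 0" using xS that t0 by auto
    then have "norm (f s (seg \<tau> x s)) \<le> B" using B by blast
    then show ?thesis unfolding B'_def by simp
  qed
  have xK: "norm (x r) \<le> K" if r: "r \<in> {t0-\<tau>..<T}" for r
  proof (cases "r \<le> t0")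
    case True
    have "norm (x r) \<le> c0" unfolding c0_def by (rule norm_le_cnorm_seg[OF xc0]) (use r True in auto)
    moreover have "0 \<le> k * c0 + 2 * k * B' * exp \<alpha> / \<alpha>" using k c00 \<alpha> unfolding B'_def by simp
    ultimately show ?thesis unfolding K_def by linarith
  next
    case False
    have tt: "r \<in> {t0..<T}" "t0 \<in> {t0..r}" using r False by auto
    have "norm (x r) \<le> k * exp (- \<alpha> * (r - t0)) * c0 + 2 * k * B' * exp \<alpha> / \<alpha>"
      unfolding c0_def
    proof (rule voc_const[OF t0(1) _ solP_voc(1)[OF x tt] solP_voc(2)[OF x tt]])
      show "t0 \<le> r" using False by simp
      show "0 \<le> B'" unfolding B'_def by simp
      show "\<forall>s\<in>{t0..r}. norm (f s (seg \<tau> x s)) \<le> B'" using fB tt by auto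
    qed
    also have "k * exp (- \<alpha> * (r - t0)) * c0 \<le> k * 1 * c0"
      using False k c00 \<alpha> by (intro mult_right_mono mult_left_mono) auto
    finally show ?thesis unfolding K_def using c00 by simp
  qed
  have "t0 \<in> {t0-\<tau>..<T}" using t0 tau by auto
  then have K0: "0 \<le> K" using xK[of t0] norm_ge_zero[of "x t0"] by linarith
  define h where "h s = (if s < T then F s (seg \<tau> x s) else 0)" for s
  define H where "H s = m s * K + B'" for s
  have Hi: "H integrable_on {t0..T}" unfolding H_def
    by (intro integrable_add integrable_on_mult_left m_int t0 integrable_const_ivl)
  have hb: "norm (h s) \<le> H s" if s: "s \<in> {t0..T}" for s
  proof (cases "s < T")
    case True
    have s0: "0 \<le> s" using s t0 by simp
    have "norm (L s (seg \<tau> x s)) \<le> m s * K"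
      by (rule L_seg_bound[OF s0]) (use xK True s in \<open>auto intro: continuous_on_subset[OF xc]\<close>)
    moreover have "norm (f s (seg \<tau> x s)) \<le> B'" using fB s True by simp
    ultimately show ?thesis unfolding h_def H_def F_def using True norm_triangle_ineq
      by (smt (verit))
  next
    case False
    then have "s = T" using s by simp
    have "0 \<le> m s * K" using m_nonneg[of s] t0 s K0 by simp
    then show ?thesis using False unfolding h_def H_def B'_def by simp
  qed
  have hint_c: "h integrable_on {t0..c}" if "c < T" for c
  proof (cases "t0 \<le> c")
    case True
    have "(\<lambda>s. F s (seg \<tau> x s)) integrable_on {t0..c}" using xi that True by auto
    then show ?thesis by (rule integrable_eq) (use that in \<open>auto simp: h_def\<close>)
  next
    case False then show ?thesis by (simp add: integrable_on_empty)
  qed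
  define cn where "cn n = T - (T - t0) / real (Suc (Suc n))" for n
  have cn: "t0 < cn n" "cn n < T" for n
  proof -
    have "(T - t0) / real (Suc (Suc n)) < T - t0" using t0 by (simp add: divide_less_eq)
    then show "t0 < cn n" unfolding cn_def by simp
    show "cn n < T" unfolding cn_def using t0 by simp
  qed
  define fn where "fn n s = (if s \<in> {t0..cn n} then h s else 0)" for n s
  have hT: "h integrable_on {t0..T}"
  proof (rule dominated_convergence(1)[of fn "{t0..T}" H h])
    fix n
    have "fn n integrable_on {t0..cn n}" using hint_c[OF cn(2)] by (rule integrable_eq) (simp add: fn_def)
    then show "fn n integrable_on {t0..T}"
      by (rule integrable_on_superset) (use cn[of n] in \<open>auto simp: fn_def\<close>)
  next
    show "H integrable_on {t0..T}" by (rule Hi)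
  next
    fix n s assume s: "s \<in> {t0..T}"
    have hs: "norm (h s) \<le> H s" by (rule hb[OF s])
    have "0 \<le> H s" using hs norm_ge_zero[of "h s"] by linarith
    then show "norm (fn n s) \<le> H s" using hs unfolding fn_def by simp
  next
    fix s assume s: "s \<in> {t0..T}"
    show "(\<lambda>n. fn n s) \<longlonglongrightarrow> h s"
    proof (cases "s < T")
      case False
      then have "fn n s = h s" for n using cn[of n] s unfolding fn_def h_def by auto
      then show ?thesis by simp
    next
      case True
      obtain N :: nat where N: "(T - t0) / (T - s) < real N" using reals_Archimedean2 by blast
      have "fn n s = h s" if "n \<ge> N" for n
      proof -
        have "(T - t0) / (T - s) < real (Suc (Suc n))" using N that by linarith
        then have "(T - t0) / real (Suc (Suc n)) < T - s" using True
          by (simp add: divide_less_eq mult.commute)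
        then have "s \<le> cn n" unfolding cn_def by simp
        then show ?thesis using s unfolding fn_def by simp
      qed
      then show ?thesis by (intro tendsto_eventually eventually_sequentiallyI[of N]) auto
    qed
  qed
  define v where "v = x t0 + integral {t0..T} h"
  define xh where "xh t = (if t < T then x t else v)" for t
  have xh_int: "xh t = x t0 + integral {t0..t} h" if "t \<in> {t0..T}" for t
  proof (cases "t < T")
    case True
    have "((\<lambda>s. F s (seg \<tau> x s)) has_integral (x t - x t0)) {t0..t}" using xi that True by auto
    then have "(h has_integral (x t - x t0)) {t0..t}"
      by (rule has_integral_eq[rotated]) (use True in \<open>auto simp: h_def\<close>)
    then show ?thesis using True unfolding xh_def by (simp add: integral_unique)
  next
    case False then show ?thesis using that unfolding xh_def v_def by simp
  qed
  have xhc: "continuous_on {t0-\<tau>..T} xh"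
  proof -
    have 1: "continuous_on {t0-\<tau>..t0} xh" using xc0 by (rule continuous_on_eq) (use t0 in \<open>auto simp: xh_def\<close>)
    have "continuous_on {t0..T} (\<lambda>t. x t0 + integral {t0..t} h)"
      by (intro continuous_on_add continuous_on_const indefinite_integral_continuous_1 hT)
    then have 2: "continuous_on {t0..T} xh" by (rule continuous_on_eq) (use xh_int in auto)
    have "continuous_on ({t0-\<tau>..t0} \<union> {t0..T}) xh" by (rule continuous_on_closed_Un[OF _ _ 1 2]) auto
    moreover have "{t0-\<tau>..t0} \<union> {t0..T} = {t0-\<tau>..T}" using t0 tau by auto
    ultimately show ?thesis by simp
  qed
  have xhx: "\<forall>t\<in>{t0-\<tau>..<T}. xh t = x t" unfolding xh_def by simp
  have solxh: "solP \<tau> L f S t0 T xh" by (rule solP_cong[OF x xhx])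
  have segT: "seg \<tau> xh T \<in> S" using inv solxh xhc t0 unfolding pos_invariant_def by auto
  have sgx: "seg \<tau> xh s = seg \<tau> x s" if "s \<in> {t0..<T}" for s by (rule seg_cong) (use xhx that in auto)
  have isxh: "isol \<tau> F t0 T xh" unfolding isol_def
  proof (intro conjI ballI)
    show "continuous_on {t0-\<tau>..T} xh" by (rule xhc)
    fix t assume t: "t \<in> {t0..T}"
    have "(h has_integral (xh t - xh t0)) {t0..t}"
    proof -
      have "h integrable_on {t0..t}" by (rule integrable_on_subinterval[OF hT]) (use t in auto)
      then show ?thesis using xh_int[OF t] xh_int[of t0] t0 by (simp add: integrable_integral)
    qed
    then show "((\<lambda>s. F s (seg \<tau> xh s)) has_integral (xh t - xh t0)) {t0..t}"
    proof (rule has_integral_spike_finite[of "{T}", rotated 2])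
      fix s assume s: "s \<in> {t0..t} - {T}"
      then have "s < T" using t by auto
      then show "F s (seg \<tau> xh s) = h s" using sgx s unfolding h_def by auto
    qed simp
  qed
  have T0: "0 \<le> T" using t0 by simp
  obtain \<delta> z where \<delta>: "\<delta> > 0" "seg \<tau> z T = seg \<tau> xh T" "solP \<tau> L f S T (T + \<delta>) z"
    using inv segT T0 unfolding pos_invariant_def by blast
  define d where "d = T + \<delta> / 2"
  have Td: "T \<le> d" "T < d" "d < T + \<delta>" unfolding d_def using \<delta> by auto
  have zc: "continuous_on {T-\<tau>..d} z"
    using \<delta>(3) Td unfolding solP_def by (auto intro: continuous_on_subset)
  have zi: "\<forall>t\<in>{T..d}. ((\<lambda>s. F s (seg \<tau> z s)) has_integral (z t - z T)) {T..t}"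
    using \<delta>(3) Td unfolding solP_def F_def by auto
  have zS: "\<forall>t\<in>{T..<T + \<delta>}. seg \<tau> z t \<in> S" using \<delta>(3) unfolding solP_def by auto
  have zxh: "\<forall>s\<in>{T-\<tau>..T}. z s = xh s"
  proof
    fix s assume s: "s \<in> {T-\<tau>..T}"
    have "seg \<tau> z T (s - T) = seg \<tau> xh T (s - T)" using \<delta>(2) by simp
    then show "z s = xh s" using s by (simp add: seg_def)
  qed
  have tT: "t0 \<le> T" using t0 by simp
  note G = glue[OF tT Td(1) tau isxh zc zi zxh]
  define w where "w = (\<lambda>t. if t \<le> T then xh t else z t)"
  have wis: "isol \<tau> F t0 d w" using G(1) unfolding w_def .
  show ?thesis
  proof (intro exI conjI)
    show "T < d" by (rule Td(2))
    show "\<forall>t\<in>{t0-\<tau>..<T}. w t = x t" using xhx unfolding w_def by simp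
    show "solP \<tau> L f S t0 d w" unfolding solP_def
    proof (intro conjI ballI)
      show "continuous_on {t0-\<tau>..<d} w" using wis unfolding isol_def by (auto intro: continuous_on_subset)
      fix t assume t: "t \<in> {t0..<d}"
      show "((\<lambda>s. L s (seg \<tau> w s) + f s (seg \<tau> w s)) has_integral (w t - w t0)) {t0..t}"
        using wis t unfolding isol_def F_def by auto
      show "seg \<tau> w t \<in> S"
      proof (cases "t < T")
        case True
        then have "seg \<tau> w t = seg \<tau> xh t" using G(3) t unfolding w_def by auto
        then show ?thesis using sgx xS t True by auto
      next
        case False
        then have "seg \<tau> w t = seg \<tau> z t" using G(4) t unfolding w_def by auto
        then show ?thesis using zS t False Td by auto
      qed
    qed
  qed
qed

end

lemma cont_halfopen:
  fixes f :: "real \<Rightarrow> 'a::topological_space"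
  assumes H: "\<And>c. a \<le> c \<Longrightarrow> c < b \<Longrightarrow> continuous_on {a..c} f"
  shows "continuous_on {a..<b} f"
  unfolding continuous_on_eq_continuous_within
proof
  fix p assume p: "p \<in> {a..<b}"
  define c where "c = (p + b) / 2"
  have c: "p < c" "c < b" using p unfolding c_def by auto
  have "continuous_on {a..c} f" using H p c by auto
  then have "continuous (at p within {a..c}) f" using p c by (simp add: continuous_on_eq_continuous_within)
  moreover have "at p within {a..<b} = at p within {a..c}"
    by (rule at_within_nhd[of p "{..<c}"]) (use c in auto)
  ultimately show "continuous (at p within {a..<b}) f" by simp
qed

context pfde begin

lemma solP_local:
  assumes T': "t0 < T'"
    and H: "\<forall>t\<in>{t0..<T'}. \<exists>U y. t < U \<and> solP \<tau> L f S t0 U y \<and> (\<forall>s\<in>{t0-\<tau>..<U}. ys s = y s)"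
  shows "solP \<tau> L f S t0 T' ys"
proof -
  have loc: "\<exists>U. t < U \<and> solP \<tau> L f S t0 U ys" if t: "t \<in> {t0..<T'}" for t
  proof -
    obtain U y where Uy: "t < U" "solP \<tau> L f S t0 U y" "\<forall>s\<in>{t0-\<tau>..<U}. ys s = y s"
      using H t by blast
    then show ?thesis using solP_cong[OF Uy(2) Uy(3)] by blast
  qed
  show ?thesis unfolding solP_def
  proof (intro conjI ballI)
    show "continuous_on {t0-\<tau>..<T'} ys"
    proof (rule cont_halfopen)
      fix c assume c: "t0 - \<tau> \<le> c" "c < T'"
      define t where "t = max c t0"
      have t: "t \<in> {t0..<T'}" unfolding t_def using c T' by auto
      obtain U where U: "t < U" "solP \<tau> L f S t0 U ys" using loc[OF t] by blast
      have "continuous_on {t0-\<tau>..<U} ys" using U(2) unfolding solP_def by blast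
      then show "continuous_on {t0-\<tau>..c} ys" by (rule continuous_on_subset) (use U(1) t_def in auto)
    qed
    fix t assume t: "t \<in> {t0..<T'}"
    obtain U where U: "t < U" "solP \<tau> L f S t0 U ys" using loc[OF t] by blast
    show "seg \<tau> ys t \<in> S" using U t unfolding solP_def by auto
    show "((\<lambda>s. L s (seg \<tau> ys s) + f s (seg \<tau> ys s)) has_integral (ys t - ys t0)) {t0..t}"
      using U t unfolding solP_def by auto
  qed
qed

lemma extend_global:
  assumes B: "\<forall>t\<ge>0. \<forall>\<phi>\<in>S. norm (f t \<phi>) \<le> B" and t0: "0 \<le> t0" "t0 < T" and x: "solP \<tau> L f S t0 T x"
  shows "\<exists>y. globP \<tau> L f S t0 y \<and> (\<forall>t\<in>{t0-\<tau>..<T}. y t = x t)"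
proof -
  define gr where "gr y U = (\<lambda>t. (t, y t)) ` {t. t0 - \<tau> \<le> t \<and> ereal t < U}"
    for y :: "real \<Rightarrow> 'a" and U :: ereal
  define A where "A = {G. \<exists>y U. G = gr y U \<and> ereal T \<le> U \<and>
      (\<forall>T'. t0 < T' \<and> ereal T' \<le> U \<longrightarrow> solP \<tau> L f S t0 T' y) \<and> (\<forall>t\<in>{t0-\<tau>..<T}. y t = x t)}"
  have grI: "(t, y t) \<in> gr y U" if "t0 - \<tau> \<le> t" "ereal t < U" for t y U
    unfolding gr_def using that by blast
  have grD: "t0 - \<tau> \<le> t \<and> ereal t < U \<and> v = y t" if "(t, v) \<in> gr y U" for t v y U
    using that unfolding gr_def by auto
  have ub: "\<exists>U\<in>A. \<forall>X\<in>C. X \<subseteq> U" if C: "C \<in> chains A" for C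
  proof (cases "C = {}")
    case True
    have "gr x (ereal T) \<in> A" unfolding A_def
      using x by (auto intro!: exI[of _ x] exI[of _ "ereal T"] intro: solP_mono)
    then show ?thesis using True by blast
  next
    case False
    have CA: "C \<subseteq> A" and ch: "\<forall>G1\<in>C. \<forall>G2\<in>C. G1 \<subseteq> G2 \<or> G2 \<subseteq> G1"
      using C unfolding chains_def chain_subset_def by auto
    define UC where "UC = \<Union>C"
    have func: "v1 = v2" if h12: "(t, v1) \<in> UC" "(t, v2) \<in> UC" for t v1 v2
    proof -
      obtain G1 G2 where G: "G1 \<in> C" "G2 \<in> C" "(t, v1) \<in> G1" "(t, v2) \<in> G2"
        using h12 unfolding UC_def by blast
      obtain G where G': "G \<in> C" "(t, v1) \<in> G" "(t, v2) \<in> G" using ch G by blast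
      then obtain y U where "G = gr y U" using CA unfolding A_def by blast
      then show ?thesis using grD G' by metis
    qed
    define D where "D = fst ` UC"
    define ys where "ys t = (SOME v. (t, v) \<in> UC)" for t
    have ysU: "(t, ys t) \<in> UC" if tD: "t \<in> D" for t
    proof -
      obtain v where "(t, v) \<in> UC" using tD unfolding D_def by force
      then show ?thesis unfolding ys_def by (rule someI)
    qed
    have ysG: "ys t = y t" if "gr y U \<in> C" "t0 - \<tau> \<le> t" "ereal t < U" for y U t
    proof -
      have "(t, y t) \<in> UC" unfolding UC_def using that grI by blast
      then have "t \<in> D" unfolding D_def by force
      then show ?thesis using func ysU \<open>(t, y t) \<in> UC\<close> by blast
    qed
    have memC: "\<exists>y U. G = gr y U \<and> ereal T \<le> U \<and>
      (\<forall>T'. t0 < T' \<and> ereal T' \<le> U \<longrightarrow> solP \<tau> L f S t0 T' y) \<and> (\<forall>t\<in>{t0-\<tau>..<T}. y t = x t)"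
      if "G \<in> C" for G using that CA unfolding A_def by blast
    have Dmem: "t \<in> D \<longleftrightarrow> (\<exists>y U. gr y U \<in> C \<and> t0 - \<tau> \<le> t \<and> ereal t < U)" for t
    proof
      assume "t \<in> D"
      then obtain v G where "G \<in> C" "(t, v) \<in> G" unfolding D_def UC_def by force
      moreover obtain y U where "G = gr y U" using memC[OF \<open>G \<in> C\<close>] by blast
      ultimately show "\<exists>y U. gr y U \<in> C \<and> t0 - \<tau> \<le> t \<and> ereal t < U" using grD by metis
    next
      assume "\<exists>y U. gr y U \<in> C \<and> t0 - \<tau> \<le> t \<and> ereal t < U"
      then obtain y U where "gr y U \<in> C" "t0 - \<tau> \<le> t" "ereal t < U" by blast
      then have "(t, y t) \<in> UC" unfolding UC_def using grI by blast
      then show "t \<in> D" unfolding D_def by force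
    qed
    define Ub where "Ub = (SUP t\<in>D. ereal t)"
    have Dchar: "t \<in> D \<longleftrightarrow> t0 - \<tau> \<le> t \<and> ereal t < Ub" for t
    proof
      assume tD: "t \<in> D"
      then obtain y U where yU: "gr y U \<in> C" "t0 - \<tau> \<le> t" "ereal t < U" using Dmem by blast
      obtain z where z: "ereal t < ereal z" "ereal z < U" using ereal_dense2[OF yU(3)] by blast
      have "z \<in> D" using Dmem yU z by auto
      then have "ereal z \<le> Ub" unfolding Ub_def by (rule SUP_upper)
      moreover have "ereal t < ereal z" using z by simp
      ultimately have "ereal t < Ub" by (meson less_le_trans)
      then show "t0 - \<tau> \<le> t \<and> ereal t < Ub" using yU by auto
    next
      assume t: "t0 - \<tau> \<le> t \<and> ereal t < Ub"
      then have "ereal t < (SUP t\<in>D. ereal t)" unfolding Ub_def by simp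
      then have "\<exists>t'\<in>D. ereal t < ereal t'" by (simp add: less_SUP_iff)
      then obtain t' where t': "t' \<in> D" "ereal t < ereal t'" by blast
      obtain y U where yU: "gr y U \<in> C" "t0 - \<tau> \<le> t'" "ereal t' < U" using Dmem[of t'] t'(1) by blast
      have "ereal t < U" using t'(2) yU(3) by (rule less_trans)
      then show "t \<in> D" using Dmem[of t] t yU(1) by blast
    qed
    obtain G0 where G0: "G0 \<in> C" using False by blast
    obtain y0 U0 where y0: "G0 = gr y0 U0" "ereal T \<le> U0" "\<forall>t\<in>{t0-\<tau>..<T}. y0 t = x t"
      using memC[OF G0] by blast
    have TD: "t \<in> D" if "t \<in> {t0-\<tau>..<T}" for t
      using Dmem G0 y0 that by (metis atLeastLessThan_iff ereal_less_eq(3) le_less_trans less_ereal.simps(1) order_less_le_trans)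
    have TUb: "ereal T \<le> Ub"
    proof (rule ccontr)
      assume "\<not> ereal T \<le> Ub"
      then have lt: "Ub < ereal T" by simp
      obtain z where z: "Ub < ereal z" "ereal z < ereal T" using ereal_dense2[OF lt] by blast
      have "t0 - \<tau> \<in> D" using TD t0 tau by auto
      then have "ereal (t0 - \<tau>) < Ub" using Dchar by blast
      then have "ereal (t0 - \<tau>) < ereal z" using z(1) by (rule less_trans)
      then have "z \<in> {t0-\<tau>..<T}" using z by auto
      then have "ereal z < Ub" using TD Dchar by blast
      then show False using z by simp
    qed
    have UCgr: "UC = gr ys Ub"
    proof
      show "UC \<subseteq> gr ys Ub"
      proof
        fix p assume p: "p \<in> UC"
        obtain t v where tv: "p = (t, v)" by force
        have tD: "t \<in> D" using p tv unfolding D_def by force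
        have "v = ys t" using func ysU[OF tD] p tv by blast
        then show "p \<in> gr ys Ub" using tv grI tD Dchar by blast
      qed
      show "gr ys Ub \<subseteq> UC"
      proof
        fix p assume "p \<in> gr ys Ub"
        then obtain t where t: "p = (t, ys t)" "t0 - \<tau> \<le> t" "ereal t < Ub" unfolding gr_def by blast
        then show "p \<in> UC" using ysU Dchar by blast
      qed
    qed
    have solys: "solP \<tau> L f S t0 T' ys" if T': "t0 < T'" "ereal T' \<le> Ub" for T'
    proof (rule solP_local[OF T'(1)], rule ballI)
      fix t assume t: "t \<in> {t0..<T'}"
      have "ereal t < ereal T'" using t by simp
      then have "ereal t < Ub" using T'(2) by (rule less_le_trans)
      moreover have "t0 - \<tau> \<le> t" using t tau by simp
      ultimately have "t \<in> D" using Dchar by blast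
      then obtain y U where yU: "gr y U \<in> C" "t0 - \<tau> \<le> t" "ereal t < U" using Dmem by blast
      obtain z where z: "ereal t < ereal z" "ereal z < U" using ereal_dense2[OF yU(3)] by blast
      obtain y' U' where y': "gr y U = gr y' U'" "ereal T \<le> U'"
        "\<forall>T'. t0 < T' \<and> ereal T' \<le> U' \<longrightarrow> solP \<tau> L f S t0 T' y'"
        using memC[OF yU(1)] by blast
      have same: "y' s = y s" if "t0 - \<tau> \<le> s" "ereal s < U" for s
      proof -
        have "(s, y s) \<in> gr y' U'" using y'(1) grI that by metis
        then show ?thesis using grD by metis
      qed
      have zU': "ereal z < U'"
      proof -
        have "(z, y z) \<in> gr y' U'" using y'(1) grI z yU(2) by (metis less_ereal.simps(1) order.strict_implies_order order_trans)
        then show ?thesis using grD by blast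
      qed
      have "solP \<tau> L f S t0 z y'" using y'(3) z t zU' by auto
      moreover have "\<forall>s\<in>{t0-\<tau>..<z}. y s = y' s"
      proof
        fix s assume s: "s \<in> {t0-\<tau>..<z}"
        then have "ereal s < ereal z" by simp
        then have "ereal s < U" using z(2) by (rule less_trans)
        then show "y s = y' s" using same s by simp
      qed
      ultimately have "solP \<tau> L f S t0 z y" by (rule solP_cong)
      moreover have "\<forall>s\<in>{t0-\<tau>..<z}. ys s = y s"
      proof
        fix s assume s: "s \<in> {t0-\<tau>..<z}"
        then have "ereal s < ereal z" by simp
        then have "ereal s < U" using z(2) by (rule less_trans)
        then show "ys s = y s" using ysG[OF yU(1)] s by simp
      qed
      ultimately show "\<exists>U y. t < U \<and> solP \<tau> L f S t0 U y \<and> (\<forall>s\<in>{t0-\<tau>..<U}. ys s = y s)"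
        using z by auto
    qed
    have agr: "\<forall>t\<in>{t0-\<tau>..<T}. ys t = x t"
    proof
      fix t assume t: "t \<in> {t0-\<tau>..<T}"
      have "ereal t < U0" using t y0(2) by (meson atLeastLessThan_iff ereal_less_eq(3) less_ereal.simps(1) order_less_le_trans)
      then show "ys t = x t" using ysG[of y0 U0 t] G0 y0 t by auto
    qed
    have "UC \<in> A" unfolding A_def using UCgr TUb solys agr by blast
    moreover have "\<forall>X\<in>C. X \<subseteq> UC" unfolding UC_def by blast
    ultimately show ?thesis by blast
  qed
  obtain M where M: "M \<in> A" "\<forall>X\<in>A. M \<subseteq> X \<longrightarrow> X = M"
    using Zorn_Lemma2[of A] ub by blast
  obtain y U where yU: "M = gr y U" "ereal T \<le> U"
      "\<forall>T'. t0 < T' \<and> ereal T' \<le> U \<longrightarrow> solP \<tau> L f S t0 T' y" "\<forall>t\<in>{t0-\<tau>..<T}. y t = x t"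
    using M(1) unfolding A_def by blast
  show ?thesis
  proof (cases U rule: ereal_cases)
    case PInf
    then have "globP \<tau> L f S t0 y" unfolding globP_def using yU(3) by auto
    then show ?thesis using yU(4) by blast
  next
    case MInf
    then show ?thesis using yU(2) by simp
  next
    case (real u)
    have Tu: "T \<le> u" using yU(2) real by simp
    have solu: "solP \<tau> L f S t0 u y" using yU(3) real t0 Tu by auto
    obtain T'' y'' where y'': "T'' > u" "solP \<tau> L f S t0 T'' y''" "\<forall>t\<in>{t0-\<tau>..<u}. y'' t = y t"
      using extP[OF B t0(1) _ solu] t0 Tu by auto
    have "gr y'' (ereal T'') \<in> A" unfolding A_def
    proof (intro CollectI exI conjI allI impI ballI)
      show "ereal T \<le> ereal T''" using Tu y'' by simp
      fix T' assume "t0 < T' \<and> ereal T' \<le> ereal T''"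
      then show "solP \<tau> L f S t0 T' y''" using solP_mono[OF y''(2)] by simp
    next
      fix t assume "t \<in> {t0-\<tau>..<T}"
      then show "y'' t = x t" using y''(3) yU(4) Tu by auto
    qed simp
    moreover have "M \<subseteq> gr y'' (ereal T'')"
    proof
      fix p assume "p \<in> M"
      then obtain t where t: "p = (t, y t)" "t0 - \<tau> \<le> t" "ereal t < U" using yU(1) unfolding gr_def by blast
      then have "t < u" using real by simp
      then have "p = (t, y'' t)" using y''(3) t by simp
      then show "p \<in> gr y'' (ereal T'')" using grI t \<open>t < u\<close> y''(1) by simp
    qed
    ultimately have eq: "gr y'' (ereal T'') = M" using M(2) by blast
    have "(u, y'' u) \<in> gr y'' (ereal T'')" using grI y''(1) Tu t0 tau by simp
    then have "(u, y'' u) \<in> gr y U" using eq yU(1) by simp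
    then show ?thesis using grD real by fastforce
  qed
qed

end

theorem theorem2p1:
  fixes \<tau> :: real
    and L :: "real \<Rightarrow> (real \<Rightarrow> real^'n) \<Rightarrow> real^'n"
    and f :: "real \<Rightarrow> (real \<Rightarrow> real^'n) \<Rightarrow> real^'n"
    and m :: "real \<Rightarrow> real"
    and S :: "(real \<Rightarrow> real^'n) set"
    and k \<alpha> :: real
  assumes tau: "\<tau> \<ge> 0"
    and L_add: "\<forall>t\<ge>0. \<forall>\<phi>\<in>Cspace \<tau>. \<forall>\<psi>\<in>Cspace \<tau>. L t (\<lambda>\<theta>. \<phi> \<theta> + \<psi> \<theta>) = L t \<phi> + L t \<psi>"
    and L_scale: "\<forall>t\<ge>0. \<forall>c::real. \<forall>\<phi>\<in>Cspace \<tau>. L t (\<lambda>\<theta>. c *\<^sub>R \<phi> \<theta>) = c *\<^sub>R L t \<phi>"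
    and L_meas: "\<forall>\<phi>\<in>Cspace \<tau>. set_borel_measurable lborel {0..} (\<lambda>t. L t \<phi>)"
    and L_bound: "\<forall>t\<ge>0. \<forall>\<phi>\<in>Cspace \<tau>. norm (L t \<phi>) \<le> m t * cnorm \<tau> \<phi>"
    and m_loc: "\<forall>T\<ge>0. set_integrable lborel {0..T} m"
    and k: "k > 0" and \<alpha>: "\<alpha> > 0"
    and stable: "exp_stable \<tau> L k \<alpha>"
    and S: "S \<subseteq> Cspace \<tau>"
    and f_cont: "cont_on_S \<tau> f S"
    and inv: "pos_invariant \<tau> L f S"
  shows
    "((\<exists>B. \<forall>t\<ge>0. \<forall>\<phi>\<in>S. norm (f t \<phi>) \<le> B) \<longrightarrow>
        (\<forall>t0\<ge>0. \<forall>T>t0. \<forall>x. solP \<tau> L f S t0 T x \<longrightarrow>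
            (\<exists>y. globP \<tau> L f S t0 y \<and> (\<forall>t\<in>{t0-\<tau>..<T}. y t = x t))) \<and>
        (\<exists>M>0. \<forall>t0\<ge>0. \<forall>x. globP \<tau> L f S t0 x \<longrightarrow>
            Limsup at_top (\<lambda>t. ereal (norm (x t))) \<le> ereal M))
     \<and>
     ((\<exists>\<beta>::real \<Rightarrow> real. (\<forall>t\<ge>0. \<beta> t \<ge> 0) \<and> set_integrable lborel {0..} \<beta> \<and>
          (\<exists>T0. \<forall>t\<ge>T0. \<forall>\<phi>\<in>S. norm (f t \<phi>) \<le> \<beta> t * cnorm \<tau> \<phi>)) \<longrightarrow>
        (\<forall>t0\<ge>0. \<forall>x. globP \<tau> L f S t0 x \<longrightarrow> (x \<longlongrightarrow> 0) at_top))"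
  proof -
  interpret pfde \<tau> L m k \<alpha> f S
    by unfold_locales (fact tau L_add L_scale L_meas L_bound m_loc k \<alpha> stable S inv)+
  show ?thesis
  proof (intro conjI impI)
    assume "\<exists>B. \<forall>t\<ge>0. \<forall>\<phi>\<in>S. norm (f t \<phi>) \<le> B"
    then obtain B where B: "\<forall>t\<ge>0. \<forall>\<phi>\<in>S. norm (f t \<phi>) \<le> B" by blast
    show "\<forall>t0\<ge>0. \<forall>T>t0. \<forall>x. solP \<tau> L f S t0 T x \<longrightarrow>
            (\<exists>y. globP \<tau> L f S t0 y \<and> (\<forall>t\<in>{t0-\<tau>..<T}. y t = x t))"
      using extend_global[OF B] by blast
    show "\<exists>M>0. \<forall>t0\<ge>0. \<forall>x. globP \<tau> L f S t0 x \<longrightarrow>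
            Limsup at_top (\<lambda>t. ereal (norm (x t))) \<le> ereal M"
    proof (intro exI conjI allI impI)
      show "0 < 2 * k * max B 0 * exp \<alpha> / \<alpha> + 1"
      proof -
        have "0 \<le> 2 * k * max B 0 * exp \<alpha> / \<alpha>" using k \<alpha> by simp
        then show ?thesis by linarith
      qed
      fix t0 :: real and x assume "0 \<le> t0" "globP \<tau> L f S t0 x"
      then show "Limsup at_top (\<lambda>t. ereal (norm (x t))) \<le> ereal (2 * k * max B 0 * exp \<alpha> / \<alpha> + 1)"
        by (rule part1_diss[OF B])
    qed
  next
    assume "\<exists>\<beta>::real \<Rightarrow> real. (\<forall>t\<ge>0. \<beta> t \<ge> 0) \<and> set_integrable lborel {0..} \<beta> \<and>
          (\<exists>T0. \<forall>t\<ge>T0. \<forall>\<phi>\<in>S. norm (f t \<phi>) \<le> \<beta> t * cnorm \<tau> \<phi>)"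
    then obtain \<beta> :: "real \<Rightarrow> real" and T0 where \<beta>: "\<forall>t\<ge>0. \<beta> t \<ge> 0" "set_integrable lborel {0..} \<beta>"
      "\<forall>t\<ge>T0. \<forall>\<phi>\<in>S. norm (f t \<phi>) \<le> \<beta> t * cnorm \<tau> \<phi>" by blast
    show "\<forall>t0\<ge>0. \<forall>x. globP \<tau> L f S t0 x \<longrightarrow> (x \<longlongrightarrow> 0) at_top"
      using part2[OF \<beta>] by blast
  qed
qed

end
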